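(* Let $n,k\ge 1$. Let $\mathbf{X}\in\mathbb{R}^{n\times k}$ be a fixed (non-random) matrix, let $\mathbf{D}\in\mathbb{R}^{n\times n}$ be a positive definite diagonal matrix, and let $\mathbf{F},\mathbf{V},\mathbf{\Omega}\in\mathbb{R}^{k\times k}$ be positive definite matrices, and $\boldsymbol{\xi}\in\mathbb{R}^k$. Consider the hierarchical Gaussian model \begin{itemize} \item $\boldsymbol{\theta}\sim N(\boldsymbol{\xi},\mathbf{V})$ (prior on the factor risk premia $\boldsymbol{\theta}=\boldsymbol{\mu}_f\in\mathbb{R}^k$); \item $\mathbf{q}\mid\boldsymbol{\theta}\sim N(\boldsymbol{\theta},\mathbf{\Omega})$ (absolute views on the factor risk premia); \item $\mathbf{f}\mid\boldsymbol{\theta},\mathbf{q}\sim N(\boldsymbol{\theta},\mathbf{F})$ (factor returns, conditionally independent of $\mathbf{q}$ given $\boldsymbol{\theta}$); \item $\mathbf{r}\mid\mathbf{f},\boldsymbol{\theta},\mathbf{q}\sim N(\mathbf{X}\mathbf{f},\mathbf{D})$ (excess asset returns, conditionally independent of $(\boldsymbol{\theta},\mathbf{q})$ given $\mathbf{f}$). \end{itemize} Define $\mathbf{S}:=(\mathbf{V}^{-1}+\mathbf{\Omega}^{-1})^{-1}$, $\mathbb{E}(\mathbf{f}\mid\mathbf{q}):=\mathbf{S}(\mathbf{V}^{-1}\boldsymbol{\xi}+\mathbf{\Omega}^{-1}\mathbf{q})$ and $\mathrm{var}(\mathbf{f}\mid\mathbf{q}):=\mathbf{S}+\mathbf{F}$.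 Then the conditional (posterior predictive) distribution of $\mathbf{r}$ given $\mathbf{q}$ is multivariate normal with \[ \mathrm{var}(\mathbf{r}\mid\mathbf{q})=\Big[\mathbf{D}^{-1}-\mathbf{D}^{-1}\mathbf{X}\big[\mathbf{X}^T\mathbf{D}^{-1}\mathbf{X}+\mathrm{var}(\mathbf{f}\mid\mathbf{q})^{-1}\big]^{-1}\mathbf{X}^T\mathbf{D}^{-1}\Big]^{-1}, \] \[ \mathbb{E}(\mathbf{r}\mid\mathbf{q})=\mathrm{var}(\mathbf{r}\mid\mathbf{q})\,\mathbf{D}^{-1}\mathbf{X}\big[\mathbf{X}^T\mathbf{D}^{-1}\mathbf{X}+\mathrm{var}(\mathbf{f}\mid\mathbf{q})^{-1}\big]^{-1}\mathrm{var}(\mathbf{f}\mid\mathbf{q})^{-1}\,\mathbb{E}(\mathbf{f}\mid\mathbf{q}). \] Consequently, for a risk-aversion parameter $\gamma>0$, the unconstrained mean-variance optimal portfolio $\mathbf{h}^*\in\mathbb{R}^n$, i.e. the maximizer over $\mathbf{w}\in\mathbb{R}^n$ of $\mathbb{E}(\mathbf{w}'\mathbf{r}\mid\mathbf{q})-\frac{\gamma}{2}\mathrm{var}(\mathbf{w}'\mathbf{r}\mid\mathbf{q})$, equals $\gamma^{-1}\mathrm{var}(\mathbf{r}\mid\mathbf{q})^{-1}\mathbb{E}(\mathbf{r}\mid\mathbf{q})$ and is given by \[ \mathbf{h}^*=\gamma^{-1}\mathbf{D}^{-1}\mathbf{X}\big[\mathbf{X}^T\mathbf{D}^{-1}\mathbf{X}+\mathrm{var}(\mathbf{f}\mid\mathbf{q})^{-1}\big]^{-1}\mathrm{var}(\mathbf{f}\mid\mathbf{q})^{-1}\,\mathbb{E}(\mathbf{f}\mid\mathbf{q}).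 \]
   Context: This is the Black-Litterman model applied to an Arbitrage-Pricing-Theory style linear factor model ("BL-APT"): $\mathbf{r}$ is the vector of excess returns of $n$ assets over the next period, $\mathbf{X}$ the matrix of factor exposures of the $n$ assets to $k$ factors, $\mathbf{f}$ the latent factor return vector, $\boldsymbol{\theta}=\boldsymbol{\mu}_f$ its mean (factor risk premia), $\mathbf{q}$ a vector of $k$ absolute views on $\boldsymbol{\mu}_f$ with view uncertainty covariance $\mathbf{\Omega}$. The prime $'$ and superscript $T$ both denote transpose. Expectations and variances in the portfolio objective are taken with respect to the conditional distribution of $\mathbf{r}$ given the observed view $\mathbf{q}$. *)

theory Defs
  imports "HOL-Analysis.Analysis"
begin

definition pos_def_mat :: "real^'n^'n \<Rightarrow> bool" where
  "pos_def_mat A \<longleftrightarrow> transpose A = A \<and> (\<forall>x. x \<noteq> 0 \<longrightarrow> 0 < x \<bullet> (A *v x))"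

definition diagonal_mat :: "real^'n^'n \<Rightarrow> bool" where
  "diagonal_mat A \<longleftrightarrow> (\<forall>i j. i \<noteq> j \<longrightarrow> A $ i $ j = 0)"

definition mvn_density :: "real^'n \<Rightarrow> real^'n^'n \<Rightarrow> real^'n \<Rightarrow> real" where
  "mvn_density mu Sig x =
     exp (- ((x - mu) \<bullet> (matrix_inv Sig *v (x - mu))) / 2)
     / sqrt ((2 * pi) ^ CARD('n) * det Sig)"

definition blapt_density_qr ::
  "real^'k \<Rightarrow> real^'k^'k \<Rightarrow> real^'k^'k \<Rightarrow> real^'k^'k \<Rightarrow> real^'k^'n \<Rightarrow> real^'n^'n
   \<Rightarrow> real^'k \<Rightarrow> real^'n \<Rightarrow> real" where
  "blapt_density_qr xi V Omega F X D q r =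
     (\<integral>theta. (\<integral>f. mvn_density xi V theta * mvn_density theta Omega q
                      * mvn_density theta F f * mvn_density (X *v f) D r \<partial>lborel) \<partial>lborel)"

definition blapt_density_q ::
  "real^'k \<Rightarrow> real^'k^'k \<Rightarrow> real^'k^'k \<Rightarrow> real^'k \<Rightarrow> real" where
  "blapt_density_q xi V Omega q =
     (\<integral>theta. mvn_density xi V theta * mvn_density theta Omega q \<partial>lborel)"

definition blapt_cond_density ::
  "real^'k \<Rightarrow> real^'k^'k \<Rightarrow> real^'k^'k \<Rightarrow> real^'k^'k \<Rightarrow> real^'k^'n \<Rightarrow> real^'n^'n
   \<Rightarrow> real^'k \<Rightarrow> real^'n \<Rightarrow> real" where
  "blapt_cond_density xi V Omega F X D q r =
     blapt_density_qr xi V Omega F X D q r / blapt_density_q xi V Omega q"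

definition blapt_cond_exp ::
  "real^'k \<Rightarrow> real^'k^'k \<Rightarrow> real^'k^'k \<Rightarrow> real^'k^'k \<Rightarrow> real^'k^'n \<Rightarrow> real^'n^'n
   \<Rightarrow> real^'k \<Rightarrow> real^'n \<Rightarrow> real" where
  "blapt_cond_exp xi V Omega F X D q w =
     (\<integral>r. (w \<bullet> r) * blapt_cond_density xi V Omega F X D q r \<partial>lborel)"

definition blapt_cond_var ::
  "real^'k \<Rightarrow> real^'k^'k \<Rightarrow> real^'k^'k \<Rightarrow> real^'k^'k \<Rightarrow> real^'k^'n \<Rightarrow> real^'n^'n
   \<Rightarrow> real^'k \<Rightarrow> real^'n \<Rightarrow> real" where
  "blapt_cond_var xi V Omega F X D q w =
     (\<integral>r. (w \<bullet> r - blapt_cond_exp xi V Omega F X D q w)\<^sup>2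
            * blapt_cond_density xi V Omega F X D q r \<partial>lborel)"

definition mv_objective ::
  "real^'k \<Rightarrow> real^'k^'k \<Rightarrow> real^'k^'k \<Rightarrow> real^'k^'k \<Rightarrow> real^'k^'n \<Rightarrow> real^'n^'n
   \<Rightarrow> real \<Rightarrow> real^'k \<Rightarrow> real^'n \<Rightarrow> real" where
  "mv_objective xi V Omega F X D gamma q w =
     blapt_cond_exp xi V Omega F X D q w - gamma / 2 * blapt_cond_var xi V Omega F X D q w"

end

theory Submission
  imports Defs "HOL-Probability.Probability"
begin

definition QI :: "'n::finite set \<Rightarrow> real^'n^'n \<Rightarrow> ('n \<Rightarrow> real) \<Rightarrow> real" where
  "QI I A x = (\<Sum>i\<in>I. \<Sum>k\<in>I. x i * A$i$k * x k)"

definition detI :: "'n::finite set \<Rightarrow> real^'n^'n \<Rightarrow> real" where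
  "detI I A = det (\<chi> i k. if i \<in> I \<and> k \<in> I then A$i$k else if i = k then 1 else 0)"

definition schur :: "real^'n::finite^'n \<Rightarrow> 'n \<Rightarrow> real^'n^'n" where
  "schur A j = (\<chi> i k. A$i$k - A$i$j * A$j$k / A$j$j)"

definition symm :: "real^'n::finite^'n \<Rightarrow> bool" where
  "symm A \<longleftrightarrow> (\<forall>i k. A$i$k = A$k$i)"

definition posI :: "'n::finite set \<Rightarrow> real^'n^'n \<Rightarrow> bool" where
  "posI I A \<longleftrightarrow> (\<forall>x. (\<exists>i\<in>I. x i \<noteq> 0) \<longrightarrow> 0 < QI I A x)"

lemma QI_insert_aux:
  fixes A :: "real^'n::finite^'n"
  assumes "j \<notin> I" "z j = y" "\<And>i. i \<in> I \<Longrightarrow> z i = x i"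
  shows "QI (insert j I) A z = y * A$j$j * y + (\<Sum>k\<in>I. y * A$j$k * x k)
        + (\<Sum>i\<in>I. x i * A$i$j * y) + (\<Sum>i\<in>I. \<Sum>k\<in>I. x i * A$i$k * x k)"
proof -
  have fI: "finite I" by simp
  have e1: "(\<Sum>i\<in>I. \<Sum>k\<in>I. z i * A$i$k * z k) = (\<Sum>i\<in>I. \<Sum>k\<in>I. x i * A$i$k * x k)"
    using assms by (auto intro!: sum.cong)
  have e2: "(\<Sum>k\<in>I. z j * A$j$k * z k) = (\<Sum>k\<in>I. y * A$j$k * x k)"
    using assms by (auto intro!: sum.cong)
  have e3: "(\<Sum>i\<in>I. z i * A$i$j * z j) = (\<Sum>i\<in>I. x i * A$i$j * y)"
    using assms by (auto intro!: sum.cong)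
  show ?thesis unfolding QI_def sum.insert[OF fI assms(1)] sum.distrib e1 e2 e3
    using assms(2) by simp
qed

lemma QI_insert:
  fixes A :: "real^'n::finite^'n"
  assumes "j \<notin> I" "symm A" "A$j$j \<noteq> 0"
  shows "QI (insert j I) A (x(j:=y)) =
     A$j$j * (y + (\<Sum>i\<in>I. A$j$i * x i) / A$j$j)^2 + QI I (schur A j) x"
proof -
  define a where "a = A$j$j"
  define s where "s = (\<Sum>i\<in>I. A$j$i * x i)"
  define T where "T = (\<Sum>i\<in>I. \<Sum>k\<in>I. x i * A$i$k * x k)"
  have sym: "\<And>i k. A$i$k = A$k$i" using assms(2) by (simp add: symm_def)
  have H1: "QI (insert j I) A (x(j:=y)) = y * a * y + 2 * y * s + T"
  proof -
    have "QI (insert j I) A (x(j:=y)) = y * A$j$j * y + (\<Sum>k\<in>I. y * A$j$k * x k)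
        + (\<Sum>i\<in>I. x i * A$i$j * y) + (\<Sum>i\<in>I. \<Sum>k\<in>I. x i * A$i$k * x k)"
      by (rule QI_insert_aux) (use assms(1) in auto)
    also have "(\<Sum>i\<in>I. x i * A$i$j * y) = y * s"
      unfolding s_def by (simp add: sum_distrib_left sym mult_ac)
    also have "(\<Sum>k\<in>I. y * A$j$k * x k) = y * s"
      unfolding s_def by (simp add: sum_distrib_left mult_ac)
    finally show ?thesis unfolding a_def T_def by linarith
  qed
  have H2: "QI I (schur A j) x = T - s * s / a"
  proof -
    have "QI I (schur A j) x = (\<Sum>i\<in>I. \<Sum>k\<in>I. x i * A$i$k * x k - (x i * A$i$j) * (A$j$k * x k) / a)"
      unfolding QI_def schur_def a_def by (simp add: algebra_simps)
    also have "\<dots> = T - (\<Sum>i\<in>I. x i * A$i$j) * (\<Sum>k\<in>I. A$j$k * x k) / a"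
      unfolding T_def by (simp add: sum_subtractf sum_divide_distrib sum_distrib_left sum_distrib_right) (rule sum.swap)
    also have "(\<Sum>i\<in>I. x i * A$i$j) = s" unfolding s_def by (simp add: sym mult_ac)
    also have "(\<Sum>k\<in>I. A$j$k * x k) = s" unfolding s_def by simp
    finally show ?thesis .
  qed
  show ?thesis unfolding H1 H2 a_def[symmetric] s_def[symmetric] using assms(3) unfolding a_def[symmetric]
    by (simp add: power2_eq_square field_simps)
qed

lemma symm_schur: "symm A \<Longrightarrow> symm (schur A j)"
  unfolding symm_def schur_def by (simp add: mult.commute)

lemma posI_diag:
  fixes A :: "real^'n::finite^'n"
  assumes "posI (insert j I) A" "j \<notin> I"
  shows "A$j$j > 0"
proof -
  have "0 < QI (insert j I) A ((\<lambda>_. 0)(j:=1))"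
    using assms(1) unfolding posI_def by (metis fun_upd_same insertI1 zero_neq_one)
  also have "QI (insert j I) A ((\<lambda>_. 0)(j:=1)) = 1 * A$j$j * 1 + (\<Sum>k\<in>I. 1 * A$j$k * 0)
        + (\<Sum>i\<in>I. 0 * A$i$j * 1) + (\<Sum>i\<in>I. \<Sum>k\<in>I. 0 * A$i$k * 0)"
    by (rule QI_insert_aux) (use assms(2) in auto)
  finally show ?thesis by simp
qed

lemma posI_schur:
  fixes A :: "real^'n::finite^'n"
  assumes "posI (insert j I) A" "j \<notin> I" "symm A"
  shows "posI I (schur A j)"
  unfolding posI_def
proof (intro allI impI)
  fix x :: "'n \<Rightarrow> real" assume "\<exists>i\<in>I. x i \<noteq> 0"
  then obtain i where i: "i \<in> I" "x i \<noteq> 0" by blast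
  have a: "A$j$j > 0" using posI_diag assms by blast
  define y where "y = - (\<Sum>i\<in>I. A$j$i * x i) / A$j$j"
  have "0 < QI (insert j I) A (x(j:=y))"
    using assms(1) i assms(2) unfolding posI_def
    by (metis fun_upd_other insertCI)
  also have "QI (insert j I) A (x(j:=y)) = QI I (schur A j) x"
    using QI_insert[OF assms(2) assms(3), of x y] a unfolding y_def by simp
  finally show "0 < QI I (schur A j) x" .
qed

lemma mult_EU_left:
  fixes B :: "real^'n::finite^'n"
  shows "((mat 1 - (\<chi> i k. if i \<in> I \<and> k = j then u i else 0)) ** B) $ i $ p
         = B$i$p - (if i \<in> I then u i * B$j$p else 0)"
proof -
  have "((mat 1 - (\<chi> i k. if i \<in> I \<and> k = j then u i else 0)) ** B) $ i $ p
      = (\<Sum>q\<in>UNIV. (if i = q then 1 else 0) * B$q$p - (if i \<in> I \<and> q = j then u i else 0) * B$q$p)"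
    by (simp add: matrix_matrix_mult_def mat_def left_diff_distrib)
  also have "\<dots> = B$i$p - (if i \<in> I then u i * B$j$p else 0)"
    by (simp add: sum_subtractf if_distrib[of "\<lambda>t. t * _"] sum.If_cases)
  finally show ?thesis .
qed

lemma mult_EU_right:
  fixes B :: "real^'n::finite^'n"
  shows "(B ** transpose (mat 1 - (\<chi> i k. if i \<in> I \<and> k = j then u i else 0))) $ i $ k
         = B$i$k - (if k \<in> I then u k * B$i$j else 0)"
proof -
  have "(B ** transpose (mat 1 - (\<chi> i k. if i \<in> I \<and> k = j then u i else 0))) $ i $ k
      = (\<Sum>q\<in>UNIV. B$i$q * (if k = q then 1 else 0) - B$i$q * (if k \<in> I \<and> q = j then u k else 0))"
    by (simp add: matrix_matrix_mult_def mat_def transpose_def right_diff_distrib)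
  also have "\<dots> = B$i$k - (if k \<in> I then u k * B$i$j else 0)"
    by (simp add: sum_subtractf if_distrib[of "\<lambda>t. _ * t"] sum.If_cases mult.commute)
  finally show ?thesis .
qed

lemma det_EU:
  fixes u :: "'n::finite \<Rightarrow> real"
  assumes "j \<notin> I"
  shows "det (mat 1 - (\<chi> i k. if i \<in> I \<and> k = j then u i else 0) :: real^'n^'n) = 1"
proof -
  let ?E = "mat 1 - (\<chi> i k. if i \<in> I \<and> k = j then u i else 0) :: real^'n^'n"
  define x :: "real^'n" where "x = - (\<Sum>i\<in>I. u i *s row i (mat 1 :: real^'n^'n))"
  have xs: "x \<in> vec.span {row k (mat 1 :: real^'n^'n) |k. k \<noteq> j}"
    unfolding x_def
    by (intro vec.span_neg vec.span_sum vec.span_scale vec.span_base) (use assms in auto)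
  have "transpose ?E = (\<chi> k. if k = j then row j (mat 1 :: real^'n^'n) + x else row k (mat 1))"
  proof -
    have "\<And>a b. (transpose ?E) $ a $ b = (\<chi> k. if k = j then row j (mat 1 :: real^'n^'n) + x else row k (mat 1)) $ a $ b"
      using assms
      by (auto simp: transpose_def mat_def row_def x_def sum_component if_distrib[of "\<lambda>t. _ * t"] sum.If_cases)
    then show ?thesis by (simp add: vec_eq_iff)
  qed
  then have "det (transpose ?E) = det (mat 1 :: real^'n^'n)"
    using det_row_span[OF xs] by (simp add: row_def[symmetric])
  then show ?thesis by simp
qed

lemma detI_insert:
  fixes A :: "real^'n::finite^'n"
  assumes j: "j \<notin> I" and sA: "symm A" and a: "A$j$j \<noteq> 0"
  shows "detI (insert j I) A = A$j$j * detI I (schur A j)"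
proof -
  define u where "u i = A$i$j / A$j$j" for i
  define E :: "real^'n^'n" where "E = mat 1 - (\<chi> i k. if i \<in> I \<and> k = j then u i else 0)"
  define M :: "real^'n^'n" where "M = (\<chi> i k. if i \<in> insert j I \<and> k \<in> insert j I then A$i$k else if i = k then 1 else 0)"
  define M' :: "real^'n^'n" where "M' = (\<chi> i k. if i \<in> I \<and> k \<in> I then schur A j$i$k else if i = k then 1 else 0)"
  have sym: "\<And>i k. A$i$k = A$k$i" using sA by (simp add: symm_def)
  have dE: "det E = 1" unfolding E_def by (rule det_EU[OF j])
  have key: "E ** M ** transpose E = (\<chi> i. if i = j then A$j$j *s M'$i else M'$i)"
  proof -
    have "\<And>i k. (E ** M ** transpose E) $ i $ k = (\<chi> i. if i = j then A$j$j *s M'$i else M'$i) $ i $ k"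
    proof -
      fix i k
      have "(E ** M ** transpose E) $ i $ k = (E ** M)$i$k - (if k \<in> I then u k * (E ** M)$i$j else 0)"
        unfolding E_def by (rule mult_EU_right)
      also have "\<dots> = (M$i$k - (if i \<in> I then u i * M$j$k else 0))
            - (if k \<in> I then u k * (M$i$j - (if i \<in> I then u i * M$j$j else 0)) else 0)"
        unfolding E_def mult_EU_left by simp
      also have "\<dots> = (\<chi> i. if i = j then A$j$j *s M'$i else M'$i) $ i $ k"
        using j a unfolding M_def M'_def u_def schur_def
        by (auto simp: sym field_simps)
      finally show "(E ** M ** transpose E) $ i $ k = (\<chi> i. if i = j then A$j$j *s M'$i else M'$i) $ i $ k" .
    qed
    then show ?thesis by (simp add: vec_eq_iff)
  qed
  have "det (E ** M ** transpose E) = det M"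
    by (simp add: det_mul dE)
  moreover have "det (\<chi> i. if i = j then A$j$j *s M'$i else M'$i) = A$j$j * det M'"
    using det_row_mul[of j "A$j$j" "\<lambda>i. M'$i" "\<lambda>i. M'$i"] by simp
  ultimately show ?thesis
    unfolding detI_def M_def[symmetric] M'_def[symmetric] using key by simp
qed

lemma gauss1:
  fixes a c :: real assumes a: "a > 0"
  shows "(\<integral>\<^sup>+y. ennreal (exp (- (a * (y + c)^2) / 2)) \<partial>lborel) = ennreal (sqrt (2*pi/a))"
proof -
  define \<sigma> where "\<sigma> = 1 / sqrt a"
  have s2: "\<sigma>^2 = 1/a" unfolding \<sigma>_def using a by (simp add: power_divide)
  have eq: "exp (- (a * (y + c)^2) / 2) = sqrt (2*pi/a) * normal_density (-c) \<sigma> y" for y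
    unfolding normal_density_def s2 using a
    by (simp add: real_sqrt_divide field_simps)
  have "(\<integral>\<^sup>+y. ennreal (exp (- (a * (y + c)^2) / 2)) \<partial>lborel)
      = (\<integral>\<^sup>+y. ennreal (sqrt (2*pi/a)) * ennreal (normal_density (-c) \<sigma> y) \<partial>lborel)"
    unfolding eq by (intro nn_integral_cong, subst ennreal_mult) (use a in auto)
  also have "\<dots> = ennreal (sqrt (2*pi/a)) * (\<integral>\<^sup>+y. ennreal (normal_density (-c) \<sigma> y) \<partial>lborel)"
    by (rule nn_integral_cmult) simp
  also have "(\<integral>\<^sup>+y. ennreal (normal_density (-c) \<sigma> y) \<partial>lborel) = 1"
  proof -
    have sp: "\<sigma> > 0" unfolding \<sigma>_def using a by simp
    show ?thesis
      by (subst nn_integral_eq_integral) (auto simp: integrable_normal_density[OF sp] integral_normal_density[OF sp])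
  qed
  finally show ?thesis by simp
qed

lemma QI_measurable[measurable]:
  "(\<lambda>x. QI I A x) \<in> borel_measurable (Pi\<^sub>M I (\<lambda>_. lborel))"
  unfolding QI_def by measurable

lemma PiM_empty_nn: "(\<integral>\<^sup>+x. f x \<partial>Pi\<^sub>M {} M) = f (\<lambda>_. undefined)"
  by (simp add: PiM_empty nn_integral_count_space_finite)

lemma gaussI:
  fixes I :: "'n::finite set"
  shows "\<forall>A. symm A \<and> posI I A \<longrightarrow> detI I A > 0 \<and>
     (\<integral>\<^sup>+x. ennreal (exp (- QI I A x / 2)) \<partial>Pi\<^sub>M I (\<lambda>_. lborel)) = ennreal (sqrt ((2*pi)^card I / detI I A))"
proof -
  have "finite I" by simp
  then show ?thesis
  proof (induction I rule: finite_induct)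
    case empty
    have "(\<chi> i k. if i \<in> {} \<and> k \<in> {} then A$i$k else if i = k then 1 else 0) = (mat 1 :: real^'n^'n)" for A :: "real^'n^'n"
      by (simp add: mat_def)
    then show ?case by (simp add: detI_def QI_def PiM_empty)
  next
    case (insert j I)
    interpret product_sigma_finite "\<lambda>_::'n. lborel :: real measure" by standard
    show ?case
    proof (intro allI impI)
      fix A :: "real^'n^'n" assume H: "symm A \<and> posI (insert j I) A"
      have a: "A$j$j > 0" using posI_diag H insert by blast
      have sS: "symm (schur A j)" using H symm_schur by blast
      have pS: "posI I (schur A j)" using posI_schur H insert by blast
      from insert.IH sS pS have IH: "detI I (schur A j) > 0"
        "(\<integral>\<^sup>+x. ennreal (exp (- QI I (schur A j) x / 2)) \<partial>Pi\<^sub>M I (\<lambda>_. lborel)) = ennreal (sqrt ((2*pi)^card I / detI I (schur A j)))"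
        by auto
      have dI: "detI (insert j I) A = A$j$j * detI I (schur A j)"
        by (intro detI_insert) (use insert H a in auto)
      have "(\<integral>\<^sup>+x. ennreal (exp (- QI (insert j I) A x / 2)) \<partial>Pi\<^sub>M (insert j I) (\<lambda>_. lborel))
          = (\<integral>\<^sup>+x. (\<integral>\<^sup>+y. ennreal (exp (- QI (insert j I) A (x(j:=y)) / 2)) \<partial>lborel) \<partial>Pi\<^sub>M I (\<lambda>_. lborel))"
        by (rule product_nn_integral_insert) (use insert in auto)
      also have "\<dots> = (\<integral>\<^sup>+x. ennreal (sqrt (2*pi/A$j$j)) * ennreal (exp (- QI I (schur A j) x / 2)) \<partial>Pi\<^sub>M I (\<lambda>_. lborel))"
      proof (rule nn_integral_cong)
        fix x :: "'n \<Rightarrow> real"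
        define c where "c = (\<Sum>i\<in>I. A$j$i * x i) / A$j$j"
        have "\<And>y. exp (- QI (insert j I) A (x(j:=y)) / 2) = exp (- QI I (schur A j) x / 2) * exp (- (A$j$j * (y + c)^2) / 2)"
          using QI_insert[of j I A x] insert H a unfolding c_def
          by (simp add: exp_add[symmetric] field_simps)
        then have "(\<integral>\<^sup>+y. ennreal (exp (- QI (insert j I) A (x(j:=y)) / 2)) \<partial>lborel)
            = (\<integral>\<^sup>+y. ennreal (exp (- QI I (schur A j) x / 2)) * ennreal (exp (- (A$j$j * (y + c)^2) / 2)) \<partial>lborel)"
          by (simp add: ennreal_mult)
        also have "\<dots> = ennreal (exp (- QI I (schur A j) x / 2)) * (\<integral>\<^sup>+y. ennreal (exp (- (A$j$j * (y + c)^2) / 2)) \<partial>lborel)"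
          by (rule nn_integral_cmult) simp
        also have "\<dots> = ennreal (sqrt (2*pi/A$j$j)) * ennreal (exp (- QI I (schur A j) x / 2))"
          using gauss1[OF a] by (simp add: mult.commute)
        finally show "(\<integral>\<^sup>+y. ennreal (exp (- QI (insert j I) A (x(j:=y)) / 2)) \<partial>lborel)
            = ennreal (sqrt (2*pi/A$j$j)) * ennreal (exp (- QI I (schur A j) x / 2))" .
      qed
      also have "\<dots> = ennreal (sqrt (2*pi/A$j$j)) * (\<integral>\<^sup>+x. ennreal (exp (- QI I (schur A j) x / 2)) \<partial>Pi\<^sub>M I (\<lambda>_. lborel))"
        by (rule nn_integral_cmult) simp
      also have "\<dots> = ennreal (sqrt (2*pi/A$j$j) * sqrt ((2*pi)^card I / detI I (schur A j)))"
        unfolding IH(2) using a IH(1) by (subst ennreal_mult) auto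
      also have "sqrt (2*pi/A$j$j) * sqrt ((2*pi)^card I / detI I (schur A j)) = sqrt ((2*pi)^card (insert j I) / detI (insert j I) A)"
        unfolding dI using insert by (simp add: real_sqrt_mult[symmetric] field_simps)
      finally show "detI (insert j I) A > 0 \<and> (\<integral>\<^sup>+x. ennreal (exp (- QI (insert j I) A x / 2)) \<partial>Pi\<^sub>M (insert j I) (\<lambda>_. lborel)) = ennreal (sqrt ((2*pi)^card (insert j I) / detI (insert j I) A))"
        using dI a IH(1) by simp
    qed
  qed
qed

lemma vec_nth_measurable[measurable]: "(\<lambda>x::real^'n. x $ i) \<in> borel_measurable borel"
proof -
  have "(\<lambda>x::real^'n. x $ i) = (\<lambda>x. x \<bullet> axis i 1)" by (simp add: inner_axis)
  then show ?thesis by simp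
qed

lemma measurable_vec_lambda_PiM[measurable]:
  "(\<lambda>f. \<chi> i. f i) \<in> measurable (Pi\<^sub>M (UNIV::'n::finite set) (\<lambda>_. lborel)) (borel :: (real^'n) measure)"
proof -
  have "\<forall>b\<in>(Basis :: (real^'n) set). (\<lambda>f::'n\<Rightarrow>real. (\<chi> i. f i) \<bullet> b) \<in> borel_measurable (Pi\<^sub>M UNIV (\<lambda>_. lborel))"
    by (auto simp: Basis_vec_def inner_axis)
  then show ?thesis
    by (subst borel_measurable_euclidean_space) simp
qed

lemma lborel_vec:
  "(lborel :: (real^'n::finite) measure) = distr (Pi\<^sub>M UNIV (\<lambda>_::'n. lborel)) borel (\<lambda>f. \<chi> i. f i)"
proof (rule lborel_eqI)
  interpret product_sigma_finite "\<lambda>_::'n. lborel :: real measure" by standard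
  fix l u :: "real^'n" assume le: "\<And>b. b \<in> Basis \<Longrightarrow> l \<bullet> b \<le> u \<bullet> b"
  have le': "l$i \<le> u$i" for i using le[of "axis i 1"] by (auto simp: Basis_vec_def inner_axis)
  have pre: "(\<lambda>f. \<chi> i. f i) -` box l u \<inter> space (Pi\<^sub>M UNIV (\<lambda>_::'n. lborel)) = Pi\<^sub>E UNIV (\<lambda>i. {l$i<..<u$i})"
    by (auto simp: mem_box_cart space_PiM PiE_def Pi_def extensional_def)
  have "emeasure (distr (Pi\<^sub>M UNIV (\<lambda>_::'n. lborel)) borel (\<lambda>f. \<chi> i. f i)) (box l u)
      = emeasure (Pi\<^sub>M UNIV (\<lambda>_::'n. lborel)) (Pi\<^sub>E UNIV (\<lambda>i. {l$i<..<u$i}))"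
    by (subst emeasure_distr) (auto simp: pre)
  also have "\<dots> = (\<Prod>i\<in>UNIV. emeasure lborel {l$i<..<u$i})"
    by (rule emeasure_PiM) auto
  also have "\<dots> = (\<Prod>i\<in>UNIV. ennreal (u$i - l$i))"
    using le' by simp
  also have "\<dots> = ennreal (\<Prod>i\<in>UNIV. u$i - l$i)"
    using le' by (simp add: prod_ennreal)
  also have "(\<Prod>i\<in>UNIV. u$i - l$i) = (\<Prod>b\<in>Basis. (u - l) \<bullet> b)"
  proof -
    have "(\<Prod>b\<in>(Basis::(real^'n) set). (u - l) \<bullet> b) = (\<Prod>i\<in>UNIV. (u - l) \<bullet> axis i 1)"
    proof -
      have B: "(Basis::(real^'n) set) = (\<lambda>i. axis i 1) ` UNIV" unfolding Basis_vec_def by auto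
      show ?thesis unfolding B by (subst prod.reindex) (auto simp: inj_on_def axis_eq_axis)
    qed
    then show ?thesis by (simp add: inner_axis)
  qed
  finally show "emeasure (distr (Pi\<^sub>M UNIV (\<lambda>_::'n. lborel)) borel (\<lambda>f. \<chi> i. f i)) (box l u) = (\<Prod>b\<in>Basis. (u - l) \<bullet> b)" .
qed simp

lemma mvec_measurable[measurable (raw)]:
  fixes A :: "real^'m::finite^'n::finite"
  shows "f \<in> borel_measurable M \<Longrightarrow> (\<lambda>x. A *v f x) \<in> borel_measurable M"
proof -
  assume f: "f \<in> borel_measurable M"
  have "continuous_on UNIV (\<lambda>x::real^'m. A *v x)"
    by (intro linear_continuous_on matrix_vector_mul_bounded_linear)
  then have "(\<lambda>x::real^'m. A *v x) \<in> borel_measurable borel"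
    by (rule borel_measurable_continuous_onI)
  then show ?thesis using f by (rule measurable_compose[rotated])
qed

lemma quad_QI:
  fixes A :: "real^'n::finite^'n"
  shows "(\<chi> i. f i) \<bullet> (A *v (\<chi> i. f i)) = QI UNIV A f"
  unfolding QI_def inner_vec_def matrix_vector_mult_def
  by (simp add: sum_distrib_left mult_ac)

lemma pos_def_symm: "pos_def_mat A \<Longrightarrow> symm A"
  unfolding pos_def_mat_def symm_def transpose_def by (metis vec_lambda_beta)

lemma pos_def_posI: "pos_def_mat A \<Longrightarrow> posI UNIV A"
  unfolding posI_def pos_def_mat_def
proof (intro allI impI)
  fix f :: "'a \<Rightarrow> real"
  assume H: "transpose A = A \<and> (\<forall>x. x \<noteq> 0 \<longrightarrow> 0 < x \<bullet> (A *v x))" "\<exists>i\<in>UNIV. f i \<noteq> 0"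
  then have "(\<chi> i. f i) \<noteq> 0" by (auto simp: vec_eq_iff)
  then show "0 < QI UNIV A f" using H quad_QI by metis
qed

lemma detI_UNIV: "detI UNIV A = det A"
  unfolding detI_def by simp

lemma gauss_vec:
  fixes A :: "real^'n::finite^'n"
  assumes "pos_def_mat A"
  shows "det A > 0"
    "(\<integral>\<^sup>+x. ennreal (exp (- (x \<bullet> (A *v x)) / 2)) \<partial>lborel) = ennreal (sqrt ((2*pi)^CARD('n) / det A))"
proof -
  have G: "detI UNIV A > 0 \<and>
     (\<integral>\<^sup>+x. ennreal (exp (- QI UNIV A x / 2)) \<partial>Pi\<^sub>M UNIV (\<lambda>_. lborel)) = ennreal (sqrt ((2*pi)^card (UNIV::'n set) / detI UNIV A))"
    using gaussI[of "UNIV::'n set"] pos_def_symm[OF assms] pos_def_posI[OF assms] by blast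
  then show "det A > 0" by (simp add: detI_UNIV)
  have "(\<integral>\<^sup>+x. ennreal (exp (- (x \<bullet> (A *v x)) / 2)) \<partial>lborel)
      = (\<integral>\<^sup>+f. ennreal (exp (- ((\<chi> i. f i) \<bullet> (A *v (\<chi> i. f i))) / 2)) \<partial>Pi\<^sub>M UNIV (\<lambda>_::'n. lborel))"
    by (subst lborel_vec) (subst nn_integral_distr, auto)
  also have "\<dots> = (\<integral>\<^sup>+x. ennreal (exp (- QI UNIV A x / 2)) \<partial>Pi\<^sub>M UNIV (\<lambda>_. lborel))"
    by (simp add: quad_QI)
  finally show "(\<integral>\<^sup>+x. ennreal (exp (- (x \<bullet> (A *v x)) / 2)) \<partial>lborel) = ennreal (sqrt ((2*pi)^CARD('n) / det A))"
    using G by (simp add: detI_UNIV)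
qed

lemma mm_add_rdistrib: "((B + C) ** A) = (B ** A) + (C ** (A::real^_^_))"
  by (vector matrix_matrix_mult_def sum.distrib[symmetric] field_simps)
lemma mm_sub_ldistrib: "(A ** (B - C)) = (A ** B) - (A ** (C::real^_^_))"
  by (vector matrix_matrix_mult_def sum_subtractf[symmetric] field_simps)
lemma mm_sub_rdistrib: "((B - C) ** A) = (B ** A) - (C ** (A::real^_^_))"
  by (vector matrix_matrix_mult_def sum_subtractf[symmetric] field_simps)
lemma transpose_add: "transpose (A + B) = transpose A + transpose (B::real^_^_)"
  by (simp add: transpose_def vec_eq_iff)
lemma transpose_diff: "transpose (A - B) = transpose A - transpose (B::real^_^_)"
  by (simp add: transpose_def vec_eq_iff)

lemma inner_mv_transpose: "(X *v u) \<bullet> v = u \<bullet> (transpose X *v (v::real^_))"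
  by (metis dot_lmul_matrix inner_commute transpose_matrix_vector)

lemma inv_unique_left:
  fixes A B :: "real^'n::finite^'n"
  assumes "B ** A = mat 1" shows "matrix_inv A = B" "invertible A"
proof -
  have inv: "invertible A" using assms invertible_left_inverse by blast
  then obtain A' where A': "A ** A' = mat 1" "A' ** A = mat 1" unfolding invertible_def by blast
  have "B = A'" by (metis A'(1) assms matrix_mul_assoc matrix_mul_lid matrix_mul_rid)
  have "A ** matrix_inv A = mat 1 \<and> matrix_inv A ** A = mat 1"
    unfolding matrix_inv_def by (rule someI[of _ A']) (use A' in auto)
  then show "matrix_inv A = B"
    by (metis A'(2) \<open>B = A'\<close> matrix_mul_assoc matrix_mul_lid matrix_mul_rid)
  show "invertible A" by (rule inv)
qed

lemma inv_unique_right: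
  fixes A B :: "real^'n::finite^'n"
  assumes "A ** B = mat 1" shows "matrix_inv A = B"
proof -
  have "B ** A = mat 1" using assms matrix_left_right_inverse by blast
  then show ?thesis by (rule inv_unique_left)
qed

lemma inv_left: "invertible (A::real^'n::finite^'n) \<Longrightarrow> matrix_inv A ** A = mat 1"
  and inv_right: "invertible (A::real^'n::finite^'n) \<Longrightarrow> A ** matrix_inv A = mat 1"
proof -
  assume "invertible A"
  then obtain A' where A': "A ** A' = mat 1" "A' ** A = mat 1" unfolding invertible_def by blast
  then have "matrix_inv A = A'" using inv_unique_right[OF A'(1)] by simp
  then show "matrix_inv A ** A = mat 1" "A ** matrix_inv A = mat 1" using A' by auto
qed

lemma inv_inv: "invertible (A::real^'n::finite^'n) \<Longrightarrow> matrix_inv (matrix_inv A) = A"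
  by (rule inv_unique_right) (rule inv_left)

lemma invertible_inv: "invertible (A::real^'n::finite^'n) \<Longrightarrow> invertible (matrix_inv A)"
  using inv_unique_left(2) inv_right by blast

lemma inv_mv_left: "invertible (A::real^'n::finite^'n) \<Longrightarrow> matrix_inv A *v (A *v x) = x"
  by (simp add: matrix_vector_mul_assoc inv_left)
lemma inv_mv_right: "invertible (A::real^'n::finite^'n) \<Longrightarrow> A *v (matrix_inv A *v x) = x"
  by (simp add: matrix_vector_mul_assoc inv_right)

lemma det_inv: "invertible (A::real^'n::finite^'n) \<Longrightarrow> det (matrix_inv A) = 1 / det A"
proof -
  assume i: "invertible A"
  have h: "det (matrix_inv A) * det A = 1" using inv_left[OF i] det_mul by (metis det_I)
  then have nz: "det A \<noteq> 0" by auto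
  show ?thesis using h nz by (simp add: field_simps)
qed

lemma pos_def_invertible:
  fixes A :: "real^'n::finite^'n"
  assumes "pos_def_mat A" shows "invertible A"
proof -
  have "\<forall>x. A *v x = 0 \<longrightarrow> x = 0"
    using assms unfolding pos_def_mat_def by (metis inner_zero_right less_irrefl)
  then show ?thesis using matrix_left_invertible_ker invertible_left_inverse by blast
qed

lemma transpose_inv:
  fixes A :: "real^'n::finite^'n"
  assumes "invertible A" shows "transpose (matrix_inv A) = matrix_inv (transpose A)"
proof -
  have "transpose (matrix_inv A) ** transpose A = mat 1"
    using inv_right[OF assms] by (metis matrix_transpose_mul transpose_mat)
  then show ?thesis by (metis inv_unique_left(1))
qed

lemma pos_def_inv:
  fixes A :: "real^'n::finite^'n"
  assumes p: "pos_def_mat A" shows "pos_def_mat (matrix_inv A)"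
proof -
  have i: "invertible A" using pos_def_invertible p by blast
  have t: "transpose A = A" using p unfolding pos_def_mat_def by blast
  have "0 < x \<bullet> (matrix_inv A *v x)" if "x \<noteq> 0" for x
  proof -
    define y where "y = matrix_inv A *v x"
    have xy: "x = A *v y" unfolding y_def using inv_mv_right[OF i] by simp
    then have "y \<noteq> 0" using that by auto
    then have "0 < y \<bullet> (A *v y)" using p unfolding pos_def_mat_def by blast
    then show ?thesis unfolding y_def[symmetric] xy by (simp add: inner_commute inv_mv_left[OF i])
  qed
  then show ?thesis unfolding pos_def_mat_def using transpose_inv[OF i] t by simp
qed

lemma pos_def_add:
  fixes A B :: "real^'n::finite^'n"
  assumes "pos_def_mat A" "pos_def_mat B" shows "pos_def_mat (A + B)"
  using assms unfolding pos_def_mat_def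
  by (simp add: transpose_add matrix_vector_mult_add_rdistrib inner_add_right add_pos_pos)

lemma pos_def_add_psd:
  fixes A :: "real^'n::finite^'n" and B :: "real^'k::finite^'k" and X :: "real^'k^'n"
  assumes "pos_def_mat A" "pos_def_mat B" shows "pos_def_mat (A + X ** B ** transpose X)"
proof -
  have tB: "transpose B = B" using assms(2) unfolding pos_def_mat_def by blast
  have "0 \<le> x \<bullet> ((X ** B ** transpose X) *v x)" for x
  proof -
    have "x \<bullet> ((X ** B ** transpose X) *v x) = x \<bullet> (X *v (B *v (transpose X *v x)))"
      by (simp only: matrix_vector_mul_assoc matrix_mul_assoc)
    also have "\<dots> = (X *v (B *v (transpose X *v x))) \<bullet> x" by (rule inner_commute)
    also have "\<dots> = (B *v (transpose X *v x)) \<bullet> (transpose X *v x)" by (rule inner_mv_transpose)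
    also have "\<dots> = (transpose X *v x) \<bullet> (B *v (transpose X *v x))" by (rule inner_commute)
    also have "\<dots> \<ge> 0" using assms(2) unfolding pos_def_mat_def
      by (cases "transpose X *v x = 0") (auto intro: less_imp_le)
    finally show ?thesis .
  qed
  moreover have "transpose (X ** B ** transpose X) = X ** B ** transpose X"
    by (simp add: matrix_transpose_mul tB matrix_mul_assoc)
  ultimately show ?thesis using assms(1) unfolding pos_def_mat_def
    by (simp add: transpose_add matrix_vector_mult_add_rdistrib inner_add_right add_pos_nonneg)
qed

lemma mvn_measurable[measurable (raw)]:
  fixes f g :: "'a \<Rightarrow> real^'n::finite"
  assumes [measurable]: "f \<in> borel_measurable M" "g \<in> borel_measurable M"
  shows "(\<lambda>x. mvn_density (f x) S (g x)) \<in> borel_measurable M"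
  unfolding mvn_density_def by measurable

lemma mvn_nonneg: "pos_def_mat S \<Longrightarrow> 0 \<le> mvn_density m S x"
  unfolding mvn_density_def using gauss_vec(1)[of S] by simp

lemma gauss_shift:
  fixes A :: "real^'n::finite^'n"
  assumes "pos_def_mat A"
  shows "(\<integral>\<^sup>+x. ennreal (exp (- ((x - c) \<bullet> (A *v (x - c))) / 2)) \<partial>lborel) = ennreal (sqrt ((2*pi)^CARD('n) / det A))"
proof -
  have "(\<integral>\<^sup>+x. ennreal (exp (- ((x - c) \<bullet> (A *v (x - c))) / 2)) \<partial>lborel)
      = (\<integral>\<^sup>+x. ennreal (exp (- ((x - c) \<bullet> (A *v (x - c))) / 2)) \<partial>distr lborel borel ((+) c))"
    by (simp add: lborel_distr_plus)
  also have "\<dots> = (\<integral>\<^sup>+x. ennreal (exp (- ((c + x - c) \<bullet> (A *v (c + x - c))) / 2)) \<partial>lborel)"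
    by (subst nn_integral_distr) auto
  also have "\<dots> = ennreal (sqrt ((2*pi)^CARD('n) / det A))"
    using gauss_vec(2)[OF assms] by simp
  finally show ?thesis .
qed

lemma mvn_integral:
  fixes S :: "real^'n::finite^'n"
  assumes "pos_def_mat S"
  shows "(\<integral>\<^sup>+x. ennreal (mvn_density m S x) \<partial>lborel) = 1"
proof -
  have pi: "pos_def_mat (matrix_inv S)" using pos_def_inv assms by blast
  have i: "invertible S" using pos_def_invertible assms by blast
  have dS: "det S > 0" using gauss_vec(1)[OF assms] .
  define K where "K = 1 / sqrt ((2 * pi) ^ CARD('n) * det S)"
  have K: "K \<ge> 0" unfolding K_def using dS by simp
  have "(\<integral>\<^sup>+x. ennreal (mvn_density m S x) \<partial>lborel) = (\<integral>\<^sup>+x. ennreal K * ennreal (exp (- ((x - m) \<bullet> (matrix_inv S *v (x - m))) / 2)) \<partial>lborel)"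
    unfolding mvn_density_def K_def by (intro nn_integral_cong) (subst ennreal_mult[symmetric], use dS in auto)
  also have "\<dots> = ennreal K * ennreal (sqrt ((2*pi)^CARD('n) / det (matrix_inv S)))"
    using gauss_shift[OF pi, of m] by (subst nn_integral_cmult) auto
  also have "\<dots> = 1"
    unfolding det_inv[OF i] K_def using dS
    by (subst ennreal_mult[symmetric]) (auto simp: real_sqrt_mult real_sqrt_divide)
  finally show ?thesis .
qed

lemma integrable_mvn:
  fixes S :: "real^'n::finite^'n"
  assumes "pos_def_mat S"
  shows "integrable lborel (mvn_density m S)"
  by (rule integrableI_nonneg) (auto simp: mvn_nonneg[OF assms] mvn_integral[OF assms])

lemma kernel_mvn:
  fixes P :: "real^'n::finite^'n"
  assumes P: "pos_def_mat P" and K: "K \<ge> 0" and L: "L \<ge> 0"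
    and int: "(\<integral>\<^sup>+x. ennreal (K * exp (- ((x - c) \<bullet> (P *v (x - c))) / 2)) \<partial>lborel) = ennreal L"
  shows "K * exp (- ((x - c) \<bullet> (P *v (x - c))) / 2) = L * mvn_density c (matrix_inv P) x"
proof -
  have i: "invertible P" using pos_def_invertible P by blast
  have dP: "det P > 0" using gauss_vec(1)[OF P] .
  have "(\<integral>\<^sup>+x. ennreal (K * exp (- ((x - c) \<bullet> (P *v (x - c))) / 2)) \<partial>lborel)
      = (\<integral>\<^sup>+x. ennreal K * ennreal (exp (- ((x - c) \<bullet> (P *v (x - c))) / 2)) \<partial>lborel)"
    using K by (intro nn_integral_cong) (simp add: ennreal_mult)
  also have "\<dots> = ennreal K * ennreal (sqrt ((2*pi)^CARD('n) / det P))"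
    using gauss_shift[OF P, of c] by (subst nn_integral_cmult) auto
  finally have "ennreal (K * sqrt ((2*pi)^CARD('n) / det P)) = ennreal L"
    using int K dP by (subst ennreal_mult) auto
  then have KL: "K * sqrt ((2*pi)^CARD('n) / det P) = L"
    using K L dP by (subst (asm) ennreal_inj) auto
  have "L * mvn_density c (matrix_inv P) x = K * sqrt ((2*pi)^CARD('n) / det P) * exp (- ((x - c) \<bullet> (P *v (x - c))) / 2) / sqrt ((2 * pi) ^ CARD('n) * (1 / det P))"
    unfolding mvn_density_def inv_inv[OF i] det_inv[OF i] KL by simp
  also have "\<dots> = K * exp (- ((x - c) \<bullet> (P *v (x - c))) / 2)"
    using dP by (simp add: field_simps)
  finally show ?thesis by simp
qed

lemma woodbury:
  fixes S1 :: "real^'k::finite^'k" and S2 :: "real^'n::finite^'n" and X :: "real^'k^'n"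
  assumes i1: "invertible S1" and i2: "invertible S2"
    and iA: "invertible (matrix_inv S1 + transpose X ** matrix_inv S2 ** X)"
  shows "(matrix_inv S2 - matrix_inv S2 ** X ** matrix_inv (matrix_inv S1 + transpose X ** matrix_inv S2 ** X)
           ** transpose X ** matrix_inv S2) ** (S2 + X ** S1 ** transpose X) = mat 1"
proof -
  define Si1 where "Si1 = matrix_inv S1"
  define Si2 where "Si2 = matrix_inv S2"
  define Xt where "Xt = transpose X"
  define Ai where "Ai = matrix_inv (Si1 + Xt ** Si2 ** X)"
  have AiA: "Ai ** (Si1 + Xt ** Si2 ** X) = mat 1"
    unfolding Ai_def Si1_def Si2_def Xt_def by (rule inv_left[OF iA])
  have S1i: "Si1 ** S1 = mat 1" unfolding Si1_def by (rule inv_left[OF i1])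
  have S2i: "Si2 ** S2 = mat 1" unfolding Si2_def by (rule inv_left[OF i2])
  have K: "Ai ** Xt ** Si2 ** X = mat 1 - Ai ** Si1"
    using AiA by (simp add: matrix_add_ldistrib matrix_mul_assoc algebra_simps)
  have K2: "Ai ** Xt ** Si2 ** X ** S1 = S1 - Ai"
  proof -
    have "Ai ** Xt ** Si2 ** X ** S1 = (mat 1 - Ai ** Si1) ** S1" by (simp add: K)
    also have "\<dots> = S1 - Ai ** (Si1 ** S1)" by (simp add: mm_sub_rdistrib matrix_mul_assoc)
    also have "\<dots> = S1 - Ai" by (simp add: S1i)
    finally show ?thesis .
  qed
  define W where "W = Si2 ** X ** Ai ** Xt ** Si2"
  have WS2: "W ** S2 = Si2 ** X ** Ai ** Xt"
  proof -
    have "W ** S2 = Si2 ** X ** Ai ** Xt ** (Si2 ** S2)" unfolding W_def by (simp add: matrix_mul_assoc)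
    then show ?thesis by (simp add: S2i)
  qed
  have WX: "W ** (X ** S1 ** Xt) = Si2 ** X ** S1 ** Xt - Si2 ** X ** Ai ** Xt"
  proof -
    have "W ** (X ** S1 ** Xt) = Si2 ** X ** (Ai ** Xt ** Si2 ** X ** S1) ** Xt"
      unfolding W_def by (simp add: matrix_mul_assoc)
    also have "\<dots> = Si2 ** X ** (S1 - Ai) ** Xt" by (simp add: K2)
    also have "\<dots> = Si2 ** X ** S1 ** Xt - Si2 ** X ** Ai ** Xt"
      by (simp add: mm_sub_ldistrib mm_sub_rdistrib)
    finally show ?thesis .
  qed
  have "(Si2 - W) ** (S2 + X ** S1 ** Xt) = Si2 ** S2 + Si2 ** (X ** S1 ** Xt) - W ** S2 - W ** (X ** S1 ** Xt)"
    by (simp add: mm_sub_rdistrib matrix_add_ldistrib algebra_simps)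
  also have "\<dots> = mat 1" unfolding WS2 WX S2i by (simp add: matrix_mul_assoc)
  finally show ?thesis unfolding W_def Si1_def Si2_def Xt_def Ai_def .
qed

lemma mean_identity:
  fixes D :: "real^'n::finite^'n" and Vf :: "real^'k::finite^'k" and X :: "real^'k^'n"
  assumes iD: "invertible D" and iV: "invertible Vf"
    and iM: "invertible (transpose X ** matrix_inv D ** X + matrix_inv Vf)"
  shows "(D + X ** Vf ** transpose X) ** matrix_inv D ** X
          ** matrix_inv (transpose X ** matrix_inv D ** X + matrix_inv Vf) ** matrix_inv Vf = X"
proof -
  define Di where "Di = matrix_inv D"
  define Vi where "Vi = matrix_inv Vf"
  define Xt where "Xt = transpose X"
  define Mi where "Mi = matrix_inv (Xt ** Di ** X + Vi)"
  have DDi: "D ** Di = mat 1" unfolding Di_def by (rule inv_right[OF iD])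
  have VVi: "Vf ** Vi = mat 1" unfolding Vi_def by (rule inv_right[OF iV])
  have MMi: "(Xt ** Di ** X + Vi) ** Mi = mat 1" unfolding Mi_def Xt_def Di_def Vi_def by (rule inv_right[OF iM])
  have K: "Xt ** Di ** X ** Mi = mat 1 - Vi ** Mi"
    using MMi by (simp add: mm_add_rdistrib algebra_simps)
  have "(D + X ** Vf ** Xt) ** Di ** X ** Mi ** Vi = (D ** Di) ** X ** Mi ** Vi + X ** Vf ** (Xt ** Di ** X ** Mi) ** Vi"
    by (simp add: mm_add_rdistrib matrix_mul_assoc)
  also have "\<dots> = X ** Mi ** Vi + X ** Vf ** (mat 1 - Vi ** Mi) ** Vi" by (simp add: DDi K)
  also have "X ** Vf ** (mat 1 - Vi ** Mi) ** Vi = X ** (Vf ** Vi) - X ** (Vf ** Vi) ** Mi ** Vi"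
    by (simp add: mm_sub_ldistrib mm_sub_rdistrib matrix_mul_assoc)
  also have "\<dots> = X - X ** Mi ** Vi" by (simp add: VVi)
  finally show ?thesis unfolding Di_def Vi_def Xt_def Mi_def by simp
qed

lemma inner_sym: "transpose A = A \<Longrightarrow> u \<bullet> (A *v v) = v \<bullet> (A *v (u::real^'n::finite))"
  by (metis inner_commute inner_mv_transpose)

lemma complete_square:
  fixes A :: "real^'n::finite^'n"
  assumes t: "transpose A = A" and i: "invertible A"
  shows "g \<bullet> (A *v g) - 2 * (g \<bullet> b) = (g - matrix_inv A *v b) \<bullet> (A *v (g - matrix_inv A *v b)) - b \<bullet> (matrix_inv A *v b)"
proof -
  define \<mu> where "\<mu> = matrix_inv A *v b"
  have Am: "A *v \<mu> = b" unfolding \<mu>_def by (rule inv_mv_right[OF i])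
  have s: "\<mu> \<bullet> (A *v g) = g \<bullet> b" using inner_sym[OF t, of \<mu> g] Am by simp
  have "(g - \<mu>) \<bullet> (A *v (g - \<mu>)) = g \<bullet> (A *v g) - g \<bullet> b - \<mu> \<bullet> (A *v g) + \<mu> \<bullet> b"
    by (simp add: matrix_vector_mult_diff_distrib inner_diff_left inner_diff_right Am)
  then show ?thesis unfolding \<mu>_def[symmetric] using s by (simp add: inner_commute)
qed

lemma pos_def_trans: "pos_def_mat A \<Longrightarrow> transpose A = A"
  unfolding pos_def_mat_def by blast

lemma conv_pointwise:
  fixes S1 :: "real^'k::finite^'k" and S2 :: "real^'n::finite^'n" and X :: "real^'k^'n"
    and r :: "real^'n" and m f :: "real^'k"
  assumes p1: "pos_def_mat S1" and p2: "pos_def_mat S2"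
  defines "A \<equiv> matrix_inv S1 + transpose X ** matrix_inv S2 ** X"
  defines "P \<equiv> matrix_inv S2 - matrix_inv S2 ** X ** matrix_inv A ** transpose X ** matrix_inv S2"
  defines "\<mu> \<equiv> matrix_inv A *v (transpose X *v (matrix_inv S2 *v (r - X *v m)))"
  shows "(f - m) \<bullet> (matrix_inv S1 *v (f - m)) + (r - X *v f) \<bullet> (matrix_inv S2 *v (r - X *v f))
       = (f - (m + \<mu>)) \<bullet> (A *v (f - (m + \<mu>))) + (r - X *v m) \<bullet> (P *v (r - X *v m))"
proof -
  define Si1 where "Si1 = matrix_inv S1"
  define Si2 where "Si2 = matrix_inv S2"
  define Xt where "Xt = transpose X"
  define g where "g = f - m"
  define s where "s = r - X *v m"
  define b where "b = Xt *v (Si2 *v s)"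
  have t1: "transpose Si1 = Si1" unfolding Si1_def using pos_def_trans pos_def_inv p1 by blast
  have t2: "transpose Si2 = Si2" unfolding Si2_def using pos_def_trans pos_def_inv p2 by blast
  have pA: "pos_def_mat A"
    using pos_def_add_psd[OF pos_def_inv[OF p1] pos_def_inv[OF p2], of "transpose X"] unfolding A_def by simp
  have tA: "transpose A = A" using pos_def_trans pA by blast
  have iA: "invertible A" using pos_def_invertible pA by blast
  have rf: "r - X *v f = s - X *v g" unfolding s_def g_def by (simp add: matrix_vector_mult_diff_distrib)
  have e1: "(X *v g) \<bullet> (Si2 *v s) = g \<bullet> b" unfolding b_def Xt_def by (rule inner_mv_transpose)
  have e1': "s \<bullet> (Si2 *v (X *v g)) = g \<bullet> b" using inner_sym[OF t2, of s "X *v g"] e1 by simp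
  have e2: "(X *v g) \<bullet> (Si2 *v (X *v g)) = g \<bullet> ((Xt ** Si2 ** X) *v g)"
    unfolding Xt_def by (simp add: inner_mv_transpose matrix_vector_mul_assoc[symmetric])
  have Ag: "g \<bullet> (A *v g) = g \<bullet> (Si1 *v g) + g \<bullet> ((Xt ** Si2 ** X) *v g)"
    unfolding A_def Si1_def Si2_def Xt_def by (simp add: matrix_vector_mult_add_rdistrib inner_add_right)
  have L: "(f - m) \<bullet> (Si1 *v (f - m)) + (r - X *v f) \<bullet> (Si2 *v (r - X *v f))
      = g \<bullet> (A *v g) - 2 * (g \<bullet> b) + s \<bullet> (Si2 *v s)"
    unfolding rf g_def[symmetric] Ag
    by (simp add: matrix_vector_mult_diff_distrib inner_diff_left inner_diff_right e1 e1' e2)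
  have muv: "\<mu> = matrix_inv A *v b" unfolding \<mu>_def b_def Xt_def Si2_def s_def ..
  have cs: "g \<bullet> (A *v g) - 2 * (g \<bullet> b) = (g - \<mu>) \<bullet> (A *v (g - \<mu>)) - b \<bullet> (matrix_inv A *v b)"
    unfolding muv by (rule complete_square[OF tA iA])
  have bb: "s \<bullet> ((Si2 ** X ** matrix_inv A ** Xt ** Si2) *v s) = b \<bullet> (matrix_inv A *v b)"
  proof -
    have "s \<bullet> ((Si2 ** X ** matrix_inv A ** Xt ** Si2) *v s) = s \<bullet> (Si2 *v (X *v (matrix_inv A *v b)))"
      unfolding b_def by (simp add: matrix_vector_mul_assoc matrix_mul_assoc)
    also have "\<dots> = (X *v (matrix_inv A *v b)) \<bullet> (Si2 *v s)" by (rule inner_sym[OF t2])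
    also have "\<dots> = (matrix_inv A *v b) \<bullet> b" unfolding b_def Xt_def by (rule inner_mv_transpose)
    finally show ?thesis by (simp add: inner_commute)
  qed
  have Ps: "s \<bullet> (P *v s) = s \<bullet> (Si2 *v s) - b \<bullet> (matrix_inv A *v b)"
    unfolding P_def Si2_def[symmetric] Xt_def[symmetric] bb[symmetric]
    by (simp add: matrix_vector_mult_diff_rdistrib inner_diff_right)
  have gm: "g - \<mu> = f - (m + \<mu>)" unfolding g_def by simp
  show ?thesis
    unfolding Si1_def[symmetric] Si2_def[symmetric] L s_def[symmetric] using cs Ps gm by simp
qed

lemma conv:
  fixes S1 :: "real^'k::finite^'k" and S2 :: "real^'n::finite^'n" and X :: "real^'k^'n"
    and r :: "real^'n" and m :: "real^'k"
  assumes p1: "pos_def_mat S1" and p2: "pos_def_mat S2"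
  shows "(\<integral>\<^sup>+f. ennreal (mvn_density m S1 f * mvn_density (X *v f) S2 r) \<partial>lborel)
       = ennreal (mvn_density (X *v m) (S2 + X ** S1 ** transpose X) r)"
proof -
  define A where "A = matrix_inv S1 + transpose X ** matrix_inv S2 ** X"
  define P where "P = matrix_inv S2 - matrix_inv S2 ** X ** matrix_inv A ** transpose X ** matrix_inv S2"
  define \<Sigma> where "\<Sigma> = S2 + X ** S1 ** transpose X"
  define c1 where "c1 = 1 / sqrt ((2 * pi) ^ CARD('k) * det S1)"
  define c2 where "c2 = 1 / sqrt ((2 * pi) ^ CARD('n) * det S2)"
  define ZA where "ZA = sqrt ((2*pi)^CARD('k) / det A)"
  define Kc where "Kc = c1 * c2 * ZA"
  define \<mu> where "\<mu> = (\<lambda>r. matrix_inv A *v (transpose X *v (matrix_inv S2 *v (r - X *v m))))"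
  have pA: "pos_def_mat A"
    using pos_def_add_psd[OF pos_def_inv[OF p1] pos_def_inv[OF p2], of "transpose X"] unfolding A_def by simp
  have pS: "pos_def_mat \<Sigma>" unfolding \<Sigma>_def by (rule pos_def_add_psd[OF p2 p1])
  have iA: "invertible A" using pos_def_invertible pA by blast
  have W: "P ** \<Sigma> = mat 1" unfolding P_def \<Sigma>_def A_def
    by (rule woodbury) (use pos_def_invertible p1 p2 iA[unfolded A_def] in auto)
  have PS: "matrix_inv P = \<Sigma>" using inv_unique_right[OF W] .
  have PS2: "matrix_inv \<Sigma> = P" using inv_unique_left(1)[OF W] .
  have pP: "pos_def_mat P" using pos_def_inv[OF pS] unfolding PS2 .
  have d1: "det S1 > 0" using gauss_vec(1)[OF p1] .
  have d2: "det S2 > 0" using gauss_vec(1)[OF p2] .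
  have dA: "det A > 0" using gauss_vec(1)[OF pA] .
  have Kc0: "Kc \<ge> 0" unfolding Kc_def c1_def c2_def ZA_def using d1 d2 dA by simp
  have pw: "mvn_density m S1 f * mvn_density (X *v f) S2 r
      = (c1 * c2 * exp (- ((r - X *v m) \<bullet> (P *v (r - X *v m))) / 2))
        * exp (- ((f - (m + \<mu> r)) \<bullet> (A *v (f - (m + \<mu> r)))) / 2)" for f r
  proof -
    have "mvn_density m S1 f * mvn_density (X *v f) S2 r
        = c1 * c2 * exp (- ((f - m) \<bullet> (matrix_inv S1 *v (f - m)) + (r - X *v f) \<bullet> (matrix_inv S2 *v (r - X *v f))) / 2)"
      unfolding mvn_density_def c1_def c2_def by (simp add: exp_add[symmetric] field_simps)
    also have "\<dots> = c1 * c2 * exp (- ((f - (m + \<mu> r)) \<bullet> (A *v (f - (m + \<mu> r))) + (r - X *v m) \<bullet> (P *v (r - X *v m))) / 2)"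
      unfolding conv_pointwise[OF p1 p2, where r=r and m=m and f=f] A_def P_def \<mu>_def ..
    finally show ?thesis by (simp add: exp_add[symmetric] field_simps)
  qed
  have If: "(\<integral>\<^sup>+f. ennreal (mvn_density m S1 f * mvn_density (X *v f) S2 r) \<partial>lborel)
       = ennreal (Kc * exp (- ((r - X *v m) \<bullet> (P *v (r - X *v m))) / 2))" for r
  proof -
    have c12: "c1 * c2 * exp (- ((r - X *v m) \<bullet> (P *v (r - X *v m))) / 2) \<ge> 0"
      unfolding c1_def c2_def using d1 d2 by simp
    have "(\<integral>\<^sup>+f. ennreal (mvn_density m S1 f * mvn_density (X *v f) S2 r) \<partial>lborel)
        = (\<integral>\<^sup>+f. ennreal (c1 * c2 * exp (- ((r - X *v m) \<bullet> (P *v (r - X *v m))) / 2))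
              * ennreal (exp (- ((f - (m + \<mu> r)) \<bullet> (A *v (f - (m + \<mu> r)))) / 2)) \<partial>lborel)"
      unfolding pw using c12 by (intro nn_integral_cong) (simp add: ennreal_mult)
    also have "\<dots> = ennreal (c1 * c2 * exp (- ((r - X *v m) \<bullet> (P *v (r - X *v m))) / 2)) * ennreal ZA"
      unfolding ZA_def using gauss_shift[OF pA, of "m + \<mu> r"] by (subst nn_integral_cmult) auto
    also have "\<dots> = ennreal (Kc * exp (- ((r - X *v m) \<bullet> (P *v (r - X *v m))) / 2))"
      unfolding Kc_def using c12 dA by (subst ennreal_mult[symmetric]) (auto simp: ZA_def mult_ac)
    finally show ?thesis .
  qed
  have tot: "(\<integral>\<^sup>+r. ennreal (Kc * exp (- ((r - X *v m) \<bullet> (P *v (r - X *v m))) / 2)) \<partial>lborel) = ennreal 1"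
  proof -
    have psf: "pair_sigma_finite (lborel :: (real^'k) measure) (lborel :: (real^'n) measure)"
      by (simp add: pair_sigma_finite_def lborel.sigma_finite_measure_axioms)
    have "(\<integral>\<^sup>+r. ennreal (Kc * exp (- ((r - X *v m) \<bullet> (P *v (r - X *v m))) / 2)) \<partial>lborel)
        = (\<integral>\<^sup>+r. (\<integral>\<^sup>+f. ennreal (mvn_density m S1 f * mvn_density (X *v f) S2 r) \<partial>lborel) \<partial>lborel)"
      unfolding If ..
    also have "\<dots> = (\<integral>\<^sup>+f. (\<integral>\<^sup>+r. ennreal (mvn_density m S1 f * mvn_density (X *v f) S2 r) \<partial>lborel) \<partial>lborel)"
      by (rule pair_sigma_finite.Fubini'[OF psf]) measurable
    also have "\<dots> = (\<integral>\<^sup>+f. ennreal (mvn_density m S1 f) * (\<integral>\<^sup>+r. ennreal (mvn_density (X *v f) S2 r) \<partial>lborel) \<partial>lborel)"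
      by (intro nn_integral_cong, subst nn_integral_cmult[symmetric])
         (auto simp: ennreal_mult mvn_nonneg[OF p1] mvn_nonneg[OF p2])
    also have "\<dots> = (\<integral>\<^sup>+f. ennreal (mvn_density m S1 f) \<partial>lborel)"
      by (simp add: mvn_integral[OF p2])
    also have "\<dots> = ennreal 1" by (simp add: mvn_integral[OF p1])
    finally show ?thesis .
  qed
  have "Kc * exp (- ((r - X *v m) \<bullet> (P *v (r - X *v m))) / 2) = 1 * mvn_density (X *v m) (matrix_inv P) r"
    by (rule kernel_mvn[OF pP Kc0 _ tot]) simp
  then show ?thesis unfolding If PS \<Sigma>_def by simp
qed

lemma nn_to_bochner:
  assumes [measurable]: "f \<in> borel_measurable M" and nn: "\<And>x. 0 \<le> f x" and c: "c \<ge> 0"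
    and I: "(\<integral>\<^sup>+x. ennreal (f x) \<partial>M) = ennreal c"
  shows "integral\<^sup>L M f = c" "integrable M f"
proof -
  show "integral\<^sup>L M f = c" using I c nn by (subst integral_eq_nn_integral) auto
  show "integrable M f" using I nn by (intro integrableI_nonneg) auto
qed

lemma quad_expand:
  fixes M :: "real^'n::finite^'n"
  assumes "transpose M = M"
  shows "(x - y) \<bullet> (M *v (x - y)) = x \<bullet> (M *v x) - 2 * (x \<bullet> (M *v y)) + y \<bullet> (M *v y)"
  using inner_sym[OF assms, of y x]
  by (simp add: matrix_vector_mult_diff_distrib inner_diff_left inner_diff_right)

lemma bayes:
  fixes V Omega :: "real^'k::finite^'k" and xi q theta :: "real^'k"
  assumes pV: "pos_def_mat V" and pO: "pos_def_mat Omega"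
  shows "blapt_density_q xi V Omega q > 0"
    "mvn_density xi V theta * mvn_density theta Omega q
      = blapt_density_q xi V Omega q * mvn_density (matrix_inv (matrix_inv V + matrix_inv Omega) *v (matrix_inv V *v xi + matrix_inv Omega *v q))
           (matrix_inv (matrix_inv V + matrix_inv Omega)) theta"
proof -
  define Vi where "Vi = matrix_inv V"
  define Oi where "Oi = matrix_inv Omega"
  define Pm where "Pm = Vi + Oi"
  define S where "S = matrix_inv Pm"
  define b where "b = Vi *v xi + Oi *v q"
  define E where "E = S *v b"
  define C where "C = xi \<bullet> (Vi *v xi) + q \<bullet> (Oi *v q) - b \<bullet> (S *v b)"
  define c where "c = 1 / sqrt ((2 * pi) ^ CARD('k) * det V) * (1 / sqrt ((2 * pi) ^ CARD('k) * det Omega))"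
  define K where "K = c * exp (- C / 2)"
  have pVi: "pos_def_mat Vi" unfolding Vi_def using pos_def_inv pV by blast
  have pOi: "pos_def_mat Oi" unfolding Oi_def using pos_def_inv pO by blast
  have pP: "pos_def_mat Pm" unfolding Pm_def using pos_def_add pVi pOi by blast
  have tV: "transpose Vi = Vi" using pos_def_trans pVi by blast
  have tO: "transpose Oi = Oi" using pos_def_trans pOi by blast
  have tP: "transpose Pm = Pm" using pos_def_trans pP by blast
  have iP: "invertible Pm" using pos_def_invertible pP by blast
  have dV: "det V > 0" using gauss_vec(1)[OF pV] .
  have dO: "det Omega > 0" using gauss_vec(1)[OF pO] .
  have dP: "det Pm > 0" using gauss_vec(1)[OF pP] .
  have K0: "K \<ge> 0" unfolding K_def c_def using dV dO by simp
  have pw: "mvn_density xi V th * mvn_density th Omega q = K * exp (- ((th - E) \<bullet> (Pm *v (th - E))) / 2)" for th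
  proof -
    have q1: "(th - xi) \<bullet> (Vi *v (th - xi)) + (q - th) \<bullet> (Oi *v (q - th))
        = th \<bullet> (Pm *v th) - 2 * (th \<bullet> b) + xi \<bullet> (Vi *v xi) + q \<bullet> (Oi *v q)"
      unfolding quad_expand[OF tV] quad_expand[OF tO] Pm_def b_def
      using inner_sym[OF tO, of q th]
      by (simp add: matrix_vector_mult_add_rdistrib inner_add_right)
    have q2: "th \<bullet> (Pm *v th) - 2 * (th \<bullet> b) = (th - E) \<bullet> (Pm *v (th - E)) - b \<bullet> (S *v b)"
      unfolding E_def S_def by (rule complete_square[OF tP iP])
    have "mvn_density xi V th * mvn_density th Omega q
        = c * exp (- ((th - xi) \<bullet> (Vi *v (th - xi)) + (q - th) \<bullet> (Oi *v (q - th))) / 2)"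
      unfolding mvn_density_def c_def Vi_def Oi_def by (simp add: exp_add[symmetric] field_simps)
    also have "\<dots> = K * exp (- ((th - E) \<bullet> (Pm *v (th - E))) / 2)"
      unfolding q1 K_def C_def using q2 by (simp add: exp_add[symmetric] field_simps)
    finally show ?thesis .
  qed
  define L where "L = K * sqrt ((2*pi)^CARD('k) / det Pm)"
  have L0: "L \<ge> 0" unfolding L_def using K0 dP by simp
  have int: "(\<integral>\<^sup>+th. ennreal (K * exp (- ((th - E) \<bullet> (Pm *v (th - E))) / 2)) \<partial>lborel) = ennreal L"
  proof -
    have "(\<integral>\<^sup>+th. ennreal (K * exp (- ((th - E) \<bullet> (Pm *v (th - E))) / 2)) \<partial>lborel)
        = (\<integral>\<^sup>+th. ennreal K * ennreal (exp (- ((th - E) \<bullet> (Pm *v (th - E))) / 2)) \<partial>lborel)"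
      using K0 by (intro nn_integral_cong) (simp add: ennreal_mult)
    also have "\<dots> = ennreal K * ennreal (sqrt ((2*pi)^CARD('k) / det Pm))"
      using gauss_shift[OF pP, of E] by (subst nn_integral_cmult) auto
    also have "\<dots> = ennreal L" unfolding L_def using K0 dP by (subst ennreal_mult) auto
    finally show ?thesis .
  qed
  have bq: "blapt_density_q xi V Omega q = L"
  proof -
    have "(\<integral>\<^sup>+th. ennreal (mvn_density xi V th * mvn_density th Omega q) \<partial>lborel) = ennreal L"
      unfolding pw by (rule int)
    then show ?thesis unfolding blapt_density_q_def
      by (intro nn_to_bochner(1)) (auto simp: L0 mvn_nonneg pV pO)
  qed
  have Lpos: "L > 0"
    unfolding L_def K_def c_def using dV dO dP by simp
  then show "blapt_density_q xi V Omega q > 0" using bq by simp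
  have "mvn_density xi V theta * mvn_density theta Omega q = L * mvn_density E (matrix_inv Pm) theta"
    unfolding pw by (rule kernel_mvn[OF pP K0 L0 int])
  then show "mvn_density xi V theta * mvn_density theta Omega q
      = blapt_density_q xi V Omega q * mvn_density (matrix_inv (matrix_inv V + matrix_inv Omega) *v (matrix_inv V *v xi + matrix_inv Omega *v q))
           (matrix_inv (matrix_inv V + matrix_inv Omega)) theta"
    unfolding bq E_def S_def Pm_def b_def Vi_def Oi_def .
qed

lemma normal_sq:
  assumes s: "\<sigma> > 0"
  shows "(\<integral>\<^sup>+x. ennreal (normal_density \<mu> \<sigma> x * (x - c)\<^sup>2) \<partial>lborel) = ennreal ((\<mu> - c)\<^sup>2 + \<sigma>\<^sup>2)"
proof -
  have h1: "has_bochner_integral lborel (\<lambda>x. normal_density \<mu> \<sigma> x * (x - \<mu>)^(2*1)) (\<sigma>\<^sup>2)"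
    using normal_moment_even[OF s, of \<mu> 1] by (simp add: field_simps)
  have h2: "has_bochner_integral lborel (\<lambda>x. normal_density \<mu> \<sigma> x * (x - \<mu>)^(2*0+1)) 0"
    using normal_moment_odd[OF s, of \<mu> 0] by simp
  have h3: "has_bochner_integral lborel (\<lambda>x. normal_density \<mu> \<sigma> x) 1"
    using integrable_normal_density[OF s] integral_normal_density[OF s] has_bochner_integral_integrable
    by (metis has_bochner_integral_iff)
  have "has_bochner_integral lborel (\<lambda>x. normal_density \<mu> \<sigma> x * (x - \<mu>)^(2*1)
         + (2 * (\<mu> - c)) * (normal_density \<mu> \<sigma> x * (x - \<mu>)^(2*0+1)) + (\<mu> - c)\<^sup>2 * normal_density \<mu> \<sigma> x)
         (\<sigma>\<^sup>2 + (2 * (\<mu> - c)) * 0 + (\<mu> - c)\<^sup>2 * 1)"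
    by (intro has_bochner_integral_add has_bochner_integral_mult_right h1 h2 h3)
  moreover have "(\<lambda>x. normal_density \<mu> \<sigma> x * (x - \<mu>)^(2*1)
         + (2 * (\<mu> - c)) * (normal_density \<mu> \<sigma> x * (x - \<mu>)^(2*0+1)) + (\<mu> - c)\<^sup>2 * normal_density \<mu> \<sigma> x)
       = (\<lambda>x. normal_density \<mu> \<sigma> x * (x - c)\<^sup>2)"
    by (rule ext) (simp add: power2_eq_square algebra_simps)
  ultimately have H: "has_bochner_integral lborel (\<lambda>x. normal_density \<mu> \<sigma> x * (x - c)\<^sup>2) ((\<mu> - c)\<^sup>2 + \<sigma>\<^sup>2)"
    by (simp add: add_ac)
  show ?thesis
    using H by (subst nn_integral_eq_integral)
      (auto simp: has_bochner_integral_iff intro!: mult_nonneg_nonneg)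
qed

lemma const_vec_measurable: "(\<lambda>t::real. (\<chi> _::'n::finite. t)) \<in> borel_measurable borel"
proof -
  have "\<forall>b\<in>(Basis :: (real^'n) set). (\<lambda>t::real. (\<chi> _::'n. t) \<bullet> b) \<in> borel_measurable borel"
    by (auto simp: Basis_vec_def inner_axis)
  then show ?thesis by (subst borel_measurable_euclidean_space) simp
qed

lemma lborel1_nn:
  assumes [measurable]: "g \<in> borel_measurable (borel :: (real^1) measure)"
  shows "(\<integral>\<^sup>+y. g y \<partial>(lborel :: (real^1) measure)) = (\<integral>\<^sup>+t. g (\<chi> _. t) \<partial>lborel)"
proof -
  interpret product_sigma_finite "\<lambda>_::1. lborel :: real measure" by standard
  have U: "(UNIV :: 1 set) = {1}" by auto
  have e: "(\<chi> i. f i) = (\<chi> _::1. f 1)" for f :: "1 \<Rightarrow> real"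
    by (simp add: vec_eq_iff)
  have "(\<integral>\<^sup>+y. g y \<partial>(lborel :: (real^1) measure)) = (\<integral>\<^sup>+f. g (\<chi> i. f i) \<partial>Pi\<^sub>M UNIV (\<lambda>_::1. lborel))"
    by (subst lborel_vec) (subst nn_integral_distr[OF measurable_vec_lambda_PiM], simp only: measurable_distr_eq1 assms, rule refl)
  also have "\<dots> = (\<integral>\<^sup>+f. g (\<chi> _::1. f 1) \<partial>Pi\<^sub>M UNIV (\<lambda>_::1. lborel))"
    by (intro nn_integral_cong arg_cong[where f=g] e)
  also have "\<dots> = (\<integral>\<^sup>+f. g (\<chi> _::1. f 1) \<partial>Pi\<^sub>M {1} (\<lambda>_::1. lborel))"
    unfolding U ..
  also have "\<dots> = (\<integral>\<^sup>+t. g (\<chi> _. t) \<partial>lborel)"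
    by (rule product_nn_integral_singleton) (use measurable_compose[OF const_vec_measurable assms] in simp)
  finally show ?thesis .
qed

lemma mvn1_sq:
  fixes s a c :: real
  assumes s: "s > 0"
  shows "(\<integral>\<^sup>+y. ennreal ((y$1 - c)\<^sup>2 * mvn_density (\<chi> _::1. a) (\<chi> _ _. s) y) \<partial>lborel) = ennreal ((a - c)\<^sup>2 + s)"
proof -
  have inv: "matrix_inv (\<chi> _ _. s :: real^1^1) = (\<chi> _ _. 1/s)"
    by (rule inv_unique_right) (use s in \<open>simp add: matrix_matrix_mult_def mat_def vec_eq_iff\<close>)
  have dt: "det (\<chi> _ _. s :: real^1^1) = s" by (simp add: det_1)
  have mv: "mvn_density (\<chi> _::1. a) (\<chi> _ _. s) (\<chi> _. t) = normal_density a (sqrt s) t" for t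
  proof -
    have q: "((\<chi> _::1. t) - (\<chi> _. a)) \<bullet> ((\<chi> _ _. 1/s) *v ((\<chi> _::1. t) - (\<chi> _. a))) = (t - a)\<^sup>2 / s"
      by (simp add: inner_vec_def matrix_vector_mult_def power2_eq_square)
    show ?thesis
      unfolding mvn_density_def normal_density_def inv dt q using s
      by (simp add: real_sqrt_mult)
  qed
  have m1: "(\<lambda>y::real^1. mvn_density (\<chi> _::1. a) (\<chi> _ _. s) y) \<in> borel_measurable borel"
    by (rule mvn_measurable) simp_all
  have m2: "(\<lambda>y::real^1. (y$1 - c)\<^sup>2) \<in> borel_measurable borel"
    by (intro borel_measurable_continuous_onI continuous_intros)
  have meas: "(\<lambda>y. ennreal ((y$1 - c)\<^sup>2 * mvn_density (\<chi> _::1. a) (\<chi> _ _. s) y)) \<in> borel_measurable borel"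
    by (rule measurable_compose[OF borel_measurable_times[OF m2 m1] measurable_ennreal])
  have "(\<integral>\<^sup>+y. ennreal ((y$1 - c)\<^sup>2 * mvn_density (\<chi> _::1. a) (\<chi> _ _. s) y) \<partial>lborel)
      = (\<integral>\<^sup>+t. ennreal (((\<chi> _::1. t)$1 - c)\<^sup>2 * mvn_density (\<chi> _::1. a) (\<chi> _ _. s) (\<chi> _::1. t)) \<partial>lborel)"
    by (rule lborel1_nn[OF meas])
  also have "\<dots> = (\<integral>\<^sup>+t. ennreal (normal_density a (sqrt s) t * (t - c)\<^sup>2) \<partial>lborel)"
    by (intro nn_integral_cong) (simp only: mv vec_lambda_beta mult.commute)
  also have "\<dots> = ennreal ((a - c)\<^sup>2 + s)" using normal_sq[of "sqrt s" a c] s by simp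
  finally show ?thesis .
qed

lemma pos_def_one: "pos_def_mat (mat 1 :: real^'n::finite^'n)"
  unfolding pos_def_mat_def by (simp add: inner_gt_zero_iff)

lemma mat1_1: "(mat 1 :: real^1^1) = (\<chi> _ _. 1)"
  by (simp add: mat_def vec_eq_iff)

lemma rowX_mv: "(\<chi> _::1. \<chi> k. w$k) *v r = (\<chi> _::1. w \<bullet> r)"
  by (simp add: matrix_vector_mult_def inner_vec_def vec_eq_iff mult.commute)

lemma rowX_cov: "mat 1 + (\<chi> _::1. \<chi> k. w$k) ** S ** transpose (\<chi> _::1. \<chi> k. w$k) = (\<chi> _ _. 1 + w \<bullet> (S *v w))"
proof -
  have "\<And>i j::1. (mat 1 + (\<chi> _::1. \<chi> k. w$k) ** S ** transpose (\<chi> _::1. \<chi> k. w$k))$i$j = 1 + w \<bullet> (S *v w)"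
  proof -
    fix i j :: 1
    have ij: "i = j" by (metis num1_eq1)
    show "(mat 1 + (\<chi> _::1. \<chi> k. w$k) ** S ** transpose (\<chi> _::1. \<chi> k. w$k))$i$j = 1 + w \<bullet> (S *v w)"
      unfolding ij by (simp add: matrix_matrix_mult_def transpose_def mat_def inner_vec_def matrix_vector_mult_def
          sum_distrib_left sum_distrib_right mult_ac) (subst sum.swap, simp add: mult_ac)
  qed
  then show ?thesis by (simp add: vec_eq_iff)
qed

lemma mvn_moment2_nn:
  fixes S :: "real^'n::finite^'n" and mu w :: "real^'n" and c :: real
  assumes pS: "pos_def_mat S"
  shows "(\<integral>\<^sup>+r. ennreal ((w \<bullet> r - c)\<^sup>2 * mvn_density mu S r) \<partial>lborel) = ennreal ((w \<bullet> mu - c)\<^sup>2 + w \<bullet> (S *v w))"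
proof -
  define X :: "real^'n^1" where "X = (\<chi> _::1. \<chi> k. w$k)"
  have p1: "pos_def_mat (mat 1 :: real^1^1)" by (rule pos_def_one)
  have Xr: "X *v r = (\<chi> _::1. w \<bullet> r)" for r unfolding X_def by (rule rowX_mv)
  have cov: "mat 1 + X ** S ** transpose X = (\<chi> _ _. 1 + w \<bullet> (S *v w))" unfolding X_def by (rule rowX_cov)
  have vpos: "w \<bullet> (S *v w) \<ge> 0"
    using pS unfolding pos_def_mat_def by (cases "w = 0") (auto intro: less_imp_le)
  have psf: "pair_sigma_finite (lborel :: (real^'n) measure) (lborel :: (real^1) measure)"
    by (simp add: pair_sigma_finite_def lborel.sigma_finite_measure_axioms)
  have "ennreal ((w \<bullet> mu - c)\<^sup>2 + (1 + w \<bullet> (S *v w)))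
      = (\<integral>\<^sup>+y. ennreal ((y$1 - c)\<^sup>2 * mvn_density (X *v mu) (mat 1 + X ** S ** transpose X) y) \<partial>lborel)"
    unfolding Xr cov using mvn1_sq[where s="1 + w \<bullet> (S *v w)" and a="w \<bullet> mu" and c=c] vpos by simp
  also have "\<dots> = (\<integral>\<^sup>+y. ennreal ((y$1 - c)\<^sup>2) * (\<integral>\<^sup>+r. ennreal (mvn_density mu S r * mvn_density (X *v r) (mat 1) y) \<partial>lborel) \<partial>lborel)"
    unfolding conv[OF pS p1] using pos_def_add_psd[OF p1 pS, of X]
    by (intro nn_integral_cong) (simp add: ennreal_mult mvn_nonneg)
  also have "\<dots> = (\<integral>\<^sup>+y. (\<integral>\<^sup>+r. ennreal ((y$1 - c)\<^sup>2 * mvn_density mu S r * mvn_density (X *v r) (mat 1) y) \<partial>lborel) \<partial>lborel)"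
    by (intro nn_integral_cong, subst nn_integral_cmult[symmetric])
       (auto simp: ennreal_mult[symmetric] mvn_nonneg[OF pS] mvn_nonneg[OF p1] mult.assoc)
  also have "\<dots> = (\<integral>\<^sup>+r. (\<integral>\<^sup>+y. ennreal ((y$1 - c)\<^sup>2 * mvn_density mu S r * mvn_density (X *v r) (mat 1) y) \<partial>lborel) \<partial>lborel)"
    by (rule pair_sigma_finite.Fubini'[OF psf]) measurable
  also have "\<dots> = (\<integral>\<^sup>+r. ennreal (mvn_density mu S r) * (\<integral>\<^sup>+y. ennreal ((y$1 - c)\<^sup>2 * mvn_density (X *v r) (mat 1) y) \<partial>lborel) \<partial>lborel)"
    by (intro nn_integral_cong, subst nn_integral_cmult[symmetric])
       (auto simp: ennreal_mult[symmetric] mvn_nonneg[OF pS] mvn_nonneg[OF p1] mult_ac intro!: nn_integral_cong)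
  also have "\<dots> = (\<integral>\<^sup>+r. ennreal (mvn_density mu S r) * ennreal ((w \<bullet> r - c)\<^sup>2 + 1) \<partial>lborel)"
    unfolding Xr mat1_1 using mvn1_sq[where s=1 and c=c] by simp
  also have "\<dots> = (\<integral>\<^sup>+r. ennreal ((w \<bullet> r - c)\<^sup>2 * mvn_density mu S r) + ennreal (mvn_density mu S r) \<partial>lborel)"
    by (intro nn_integral_cong)
       (auto simp: ennreal_mult[symmetric] mvn_nonneg[OF pS] distrib_left mult.commute ennreal_plus[symmetric] simp del: ennreal_plus)
  also have "\<dots> = (\<integral>\<^sup>+r. ennreal ((w \<bullet> r - c)\<^sup>2 * mvn_density mu S r) \<partial>lborel) + 1"
    by (subst nn_integral_add) (auto simp: mvn_integral[OF pS])
  finally have E: "ennreal ((w \<bullet> mu - c)\<^sup>2 + (1 + w \<bullet> (S *v w))) = (\<integral>\<^sup>+r. ennreal ((w \<bullet> r - c)\<^sup>2 * mvn_density mu S r) \<partial>lborel) + 1" .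
  have "ennreal ((w \<bullet> mu - c)\<^sup>2 + (1 + w \<bullet> (S *v w))) = 1 + ennreal ((w \<bullet> mu - c)\<^sup>2 + w \<bullet> (S *v w))"
  proof -
    have "(w \<bullet> mu - c)\<^sup>2 + (1 + w \<bullet> (S *v w)) = 1 + ((w \<bullet> mu - c)\<^sup>2 + w \<bullet> (S *v w))" by simp
    then show ?thesis using vpos by (simp only: ennreal_plus[symmetric]) (subst ennreal_plus, auto)
  qed
  with E have "1 + (\<integral>\<^sup>+r. ennreal ((w \<bullet> r - c)\<^sup>2 * mvn_density mu S r) \<partial>lborel) = 1 + ennreal ((w \<bullet> mu - c)\<^sup>2 + w \<bullet> (S *v w))"
    by (simp only: add.commute)
  then show ?thesis
    unfolding ennreal_add_left_cancel by simp
qed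

lemma mvn_moments:
  fixes S :: "real^'n::finite^'n" and mu w :: "real^'n" and c :: real
  assumes pS: "pos_def_mat S"
  shows "integral\<^sup>L lborel (\<lambda>r. (w \<bullet> r - c)\<^sup>2 * mvn_density mu S r) = (w \<bullet> mu - c)\<^sup>2 + w \<bullet> (S *v w)"
    and "integrable lborel (\<lambda>r. (w \<bullet> r - c)\<^sup>2 * mvn_density mu S r)"
proof -
  have vpos: "w \<bullet> (S *v w) \<ge> 0"
    using pS unfolding pos_def_mat_def by (cases "w = 0") (auto intro: less_imp_le)
  note nn = nn_to_bochner[of "\<lambda>r. (w \<bullet> r - c)\<^sup>2 * mvn_density mu S r" lborel "(w \<bullet> mu - c)\<^sup>2 + w \<bullet> (S *v w)"]
  show "integral\<^sup>L lborel (\<lambda>r. (w \<bullet> r - c)\<^sup>2 * mvn_density mu S r) = (w \<bullet> mu - c)\<^sup>2 + w \<bullet> (S *v w)"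
    by (rule nn(1)) (auto simp: mvn_nonneg[OF pS] vpos mvn_moment2_nn[OF pS])
  show "integrable lborel (\<lambda>r. (w \<bullet> r - c)\<^sup>2 * mvn_density mu S r)"
    by (rule nn(2)) (auto simp: mvn_nonneg[OF pS] vpos mvn_moment2_nn[OF pS])
qed

lemma mvn_mean:
  fixes S :: "real^'n::finite^'n" and mu w :: "real^'n"
  assumes pS: "pos_def_mat S"
  shows "integral\<^sup>L lborel (\<lambda>r. (w \<bullet> r) * mvn_density mu S r) = w \<bullet> mu"
proof -
  have eq: "(\<lambda>r. (w \<bullet> r) * mvn_density mu S r)
     = (\<lambda>r. ((w \<bullet> r - (-1))\<^sup>2 * mvn_density mu S r - (w \<bullet> r - 1)\<^sup>2 * mvn_density mu S r) / 4)"
    by (rule ext) (simp add: power2_eq_square algebra_simps)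
  have "integral\<^sup>L lborel (\<lambda>r. ((w \<bullet> r - (-1))\<^sup>2 * mvn_density mu S r - (w \<bullet> r - 1)\<^sup>2 * mvn_density mu S r) / 4)
      = (integral\<^sup>L lborel (\<lambda>r. (w \<bullet> r - (-1))\<^sup>2 * mvn_density mu S r) - integral\<^sup>L lborel (\<lambda>r. (w \<bullet> r - 1)\<^sup>2 * mvn_density mu S r)) / 4"
    by (subst integral_divide_zero, subst Bochner_Integration.integral_diff[OF mvn_moments(2)[OF pS] mvn_moments(2)[OF pS]], rule refl)
  also have "\<dots> = (((w \<bullet> mu - (-1))\<^sup>2 + w \<bullet> (S *v w)) - ((w \<bullet> mu - 1)\<^sup>2 + w \<bullet> (S *v w))) / 4"
    by (simp only: mvn_moments(1)[OF pS])
  also have "\<dots> = w \<bullet> mu" by (simp add: power2_eq_square algebra_simps)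
  finally show ?thesis unfolding eq .
qed

lemma cond_density_formula:
  fixes X :: "real^'k::finite^'n::finite" and D :: "real^'n^'n"
    and F V Omega :: "real^'k^'k" and xi q :: "real^'k" and r :: "real^'n"
  assumes pD: "pos_def_mat D" and pF: "pos_def_mat F" and pV: "pos_def_mat V" and pO: "pos_def_mat Omega"
  defines "S \<equiv> matrix_inv (matrix_inv V + matrix_inv Omega)"
  defines "E \<equiv> S *v (matrix_inv V *v xi + matrix_inv Omega *v q)"
  shows "blapt_cond_density xi V Omega F X D q r
     = mvn_density (X *v E) ((D + X ** F ** transpose X) + X ** S ** transpose X) r"
proof -
  define Sr where "Sr = D + X ** F ** transpose X"
  have pS: "pos_def_mat S" unfolding S_def
    by (intro pos_def_inv pos_def_add) (use pV pO pos_def_inv in auto)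
  have pSr: "pos_def_mat Sr" unfolding Sr_def by (rule pos_def_add_psd[OF pD pF])
  have bq: "blapt_density_q xi V Omega q > 0" using bayes(1)[OF pV pO] .
  have inner: "(\<integral>f. mvn_density xi V th * mvn_density th Omega q * mvn_density th F f * mvn_density (X *v f) D r \<partial>lborel)
      = blapt_density_q xi V Omega q * (mvn_density E S th * mvn_density (X *v th) Sr r)" for th
  proof -
    have c: "(\<integral>f. mvn_density th F f * mvn_density (X *v f) D r \<partial>lborel) = mvn_density (X *v th) Sr r"
      unfolding Sr_def
      by (rule nn_to_bochner(1)) (auto simp: conv[OF pF pD] mvn_nonneg[OF pF] mvn_nonneg[OF pD]
          mvn_nonneg[OF pos_def_add_psd[OF pD pF]])
    have "(\<integral>f. mvn_density xi V th * mvn_density th Omega q * mvn_density th F f * mvn_density (X *v f) D r \<partial>lborel)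
        = (\<integral>f. (mvn_density xi V th * mvn_density th Omega q) * (mvn_density th F f * mvn_density (X *v f) D r) \<partial>lborel)"
      by (simp add: mult.assoc)
    also have "\<dots> = (mvn_density xi V th * mvn_density th Omega q) * mvn_density (X *v th) Sr r"
      by (simp only: integral_mult_right_zero c)
    also have "\<dots> = blapt_density_q xi V Omega q * (mvn_density E S th * mvn_density (X *v th) Sr r)"
      unfolding bayes(2)[OF pV pO, where xi=xi and q=q and theta=th] E_def S_def by (simp add: mult.assoc)
    finally show ?thesis .
  qed
  have outer: "(\<integral>th. mvn_density E S th * mvn_density (X *v th) Sr r \<partial>lborel) = mvn_density (X *v E) (Sr + X ** S ** transpose X) r"
    by (rule nn_to_bochner(1)) (auto simp: conv[OF pS pSr] mvn_nonneg[OF pS] mvn_nonneg[OF pSr]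
          mvn_nonneg[OF pos_def_add_psd[OF pSr pS]])
  have "blapt_density_qr xi V Omega F X D q r = blapt_density_q xi V Omega q * mvn_density (X *v E) (Sr + X ** S ** transpose X) r"
    unfolding blapt_density_qr_def inner integral_mult_right_zero outer ..
  then show ?thesis unfolding blapt_cond_density_def Sr_def using bq by simp
qed

theorem mainTheorem1:
  fixes X :: "real^'k^'n" and D :: "real^'n^'n"
    and F V Omega S Varf :: "real^'k^'k" and xi :: "real^'k"
    and Ef :: "real^'k \<Rightarrow> real^'k"
    and VarR :: "real^'n^'n" and ER :: "real^'k \<Rightarrow> real^'n"
    and gamma :: real
  assumes D_pd: "pos_def_mat D" and D_diag: "diagonal_mat D"
    and F_pd: "pos_def_mat F" and V_pd: "pos_def_mat V" and Omega_pd: "pos_def_mat Omega"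
    and S_def: "S = matrix_inv (matrix_inv V + matrix_inv Omega)"
    and Ef_def: "\<And>q. Ef q = S *v (matrix_inv V *v xi + matrix_inv Omega *v q)"
    and Varf_def: "Varf = S + F"
    and VarR_def: "VarR = matrix_inv (matrix_inv D - matrix_inv D ** X
                     ** matrix_inv (transpose X ** matrix_inv D ** X + matrix_inv Varf)
                     ** transpose X ** matrix_inv D)"
    and ER_def: "\<And>q. ER q = (VarR ** matrix_inv D ** X
                     ** matrix_inv (transpose X ** matrix_inv D ** X + matrix_inv Varf)
                     ** matrix_inv Varf) *v Ef q"
    and gamma_pos: "gamma > 0"
  shows "(\<forall>q r. blapt_cond_density xi V Omega F X D q r = mvn_density (ER q) VarR r)
    \<and> (\<forall>q. let h = (1 / gamma) *\<^sub>R (matrix_inv VarR *v ER q) in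
          (\<forall>w. mv_objective xi V Omega F X D gamma q w \<le> mv_objective xi V Omega F X D gamma q h)
        \<and> (\<forall>w. mv_objective xi V Omega F X D gamma q w = mv_objective xi V Omega F X D gamma q h \<longrightarrow> w = h)
        \<and> h = (1 / gamma) *\<^sub>R ((matrix_inv D ** X
                  ** matrix_inv (transpose X ** matrix_inv D ** X + matrix_inv Varf)
                  ** matrix_inv Varf) *v Ef q))"
proof -
  define Di where "Di = matrix_inv D"
  define Vfi where "Vfi = matrix_inv Varf"
  define Xt where "Xt = transpose X"
  define Mi where "Mi = matrix_inv (transpose X ** matrix_inv D ** X + matrix_inv Varf)"
  define B where "B = matrix_inv D ** X ** Mi ** matrix_inv Varf"
  have pS: "pos_def_mat S" unfolding S_def
    by (intro pos_def_inv pos_def_add) (use V_pd Omega_pd pos_def_inv in auto)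
  have pVf: "pos_def_mat Varf" unfolding Varf_def by (rule pos_def_add[OF pS F_pd])
  have iD: "invertible D" using pos_def_invertible D_pd by blast
  have iVf: "invertible Varf" using pos_def_invertible pVf by blast
  have pM: "pos_def_mat (transpose X ** matrix_inv D ** X + matrix_inv Varf)"
    using pos_def_add_psd[OF pos_def_inv[OF pVf] pos_def_inv[OF D_pd], of "transpose X"]
    by (simp add: add.commute)
  have iM: "invertible (transpose X ** matrix_inv D ** X + matrix_inv Varf)"
    using pos_def_invertible pM by blast
  have iM': "invertible (matrix_inv Varf + transpose X ** matrix_inv D ** X)"
    using iM by (simp add: add.commute)
  have W: "(matrix_inv D - matrix_inv D ** X ** matrix_inv (transpose X ** matrix_inv D ** X + matrix_inv Varf)
                     ** transpose X ** matrix_inv D) ** (D + X ** Varf ** transpose X) = mat 1"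
    using woodbury[OF iVf iD iM'] by (simp add: add.commute)
  have VarR_eq: "VarR = D + X ** Varf ** transpose X"
    unfolding VarR_def by (rule inv_unique_right[OF W])
  have VarR_eq2: "VarR = (D + X ** F ** transpose X) + X ** S ** transpose X"
    unfolding VarR_eq Varf_def by (simp add: matrix_add_ldistrib mm_add_rdistrib add_ac)
  have pR: "pos_def_mat VarR" unfolding VarR_eq by (rule pos_def_add_psd[OF D_pd pVf])
  have iR: "invertible VarR" using pos_def_invertible pR by blast
  have tR: "transpose VarR = VarR" using pos_def_trans pR by blast
  have ERB: "ER q = VarR *v (B *v Ef q)" for q
    unfolding ER_def B_def Mi_def by (simp add: matrix_vector_mul_assoc matrix_mul_assoc)
  have ERX: "ER q = X *v Ef q" for q
  proof -
    have "VarR ** matrix_inv D ** X ** matrix_inv (transpose X ** matrix_inv D ** X + matrix_inv Varf) ** matrix_inv Varf = X"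
      unfolding VarR_eq by (rule mean_identity[OF iD iVf iM])
    then show ?thesis unfolding ER_def by simp
  qed
  have dens: "blapt_cond_density xi V Omega F X D q r = mvn_density (ER q) VarR r" for q r
    unfolding cond_density_formula[OF D_pd F_pd V_pd Omega_pd] ERX Ef_def VarR_eq2 S_def ..
  have cexp: "blapt_cond_exp xi V Omega F X D q w = w \<bullet> ER q" for q w
    unfolding blapt_cond_exp_def dens by (rule mvn_mean[OF pR])
  have cvar: "blapt_cond_var xi V Omega F X D q w = w \<bullet> (VarR *v w)" for q w
    unfolding blapt_cond_var_def cexp dens using mvn_moments(1)[OF pR, of w "w \<bullet> ER q" "ER q"] by simp
  have obj: "mv_objective xi V Omega F X D gamma q w = w \<bullet> ER q - gamma / 2 * (w \<bullet> (VarR *v w))" for q w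
    unfolding mv_objective_def cexp cvar ..
  show ?thesis
  proof (intro conjI allI)
    fix q r show "blapt_cond_density xi V Omega F X D q r = mvn_density (ER q) VarR r" by (rule dens)
  next
    fix q
    define h where "h = (1 / gamma) *\<^sub>R (matrix_inv VarR *v ER q)"
    have Rh: "VarR *v h = (1 / gamma) *\<^sub>R ER q"
      unfolding h_def by (simp add: matrix_vector_mult_scaleR inv_mv_right[OF iR])
    have diff: "mv_objective xi V Omega F X D gamma q h - mv_objective xi V Omega F X D gamma q w
        = gamma / 2 * ((w - h) \<bullet> (VarR *v (w - h)))" for w
    proof -
      have s1: "h \<bullet> (VarR *v w) = w \<bullet> (VarR *v h)" using inner_sym[OF tR] by blast
      have e1: "w \<bullet> (VarR *v h) = (1 / gamma) * (w \<bullet> ER q)" unfolding Rh by simp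
      have e2: "h \<bullet> (VarR *v h) = (1 / gamma) * (h \<bullet> ER q)" unfolding Rh by simp
      show ?thesis unfolding obj
        using s1 e1 e2 gamma_pos
        by (simp add: matrix_vector_mult_diff_distrib inner_diff_left inner_diff_right field_simps)
    qed
    have nonneg: "(w - h) \<bullet> (VarR *v (w - h)) \<ge> 0" for w
      using pR unfolding pos_def_mat_def by (cases "w - h = 0") (auto intro: less_imp_le)
    have opt: "mv_objective xi V Omega F X D gamma q w \<le> mv_objective xi V Omega F X D gamma q h" for w
    proof -
      have "gamma / 2 * ((w - h) \<bullet> (VarR *v (w - h))) \<ge> 0"
        using nonneg[of w] gamma_pos by simp
      then show ?thesis using diff[of w] by linarith
    qed
    have uniq: "mv_objective xi V Omega F X D gamma q w = mv_objective xi V Omega F X D gamma q h \<Longrightarrow> w = h" for w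
    proof (rule ccontr)
      assume eq: "mv_objective xi V Omega F X D gamma q w = mv_objective xi V Omega F X D gamma q h" and ne: "w \<noteq> h"
      then have "(w - h) \<bullet> (VarR *v (w - h)) > 0" using pR unfolding pos_def_mat_def by auto
      then show False using diff[of w] eq gamma_pos by simp
    qed
    have hform: "h = (1 / gamma) *\<^sub>R ((matrix_inv D ** X
                  ** matrix_inv (transpose X ** matrix_inv D ** X + matrix_inv Varf)
                  ** matrix_inv Varf) *v Ef q)"
      unfolding h_def ERB inv_mv_left[OF iR] B_def Mi_def ..
    show "let h = (1 / gamma) *\<^sub>R (matrix_inv VarR *v ER q) in
          (\<forall>w. mv_objective xi V Omega F X D gamma q w \<le> mv_objective xi V Omega F X D gamma q h)
        \<and> (\<forall>w. mv_objective xi V Omega F X D gamma q w = mv_objective xi V Omega F X D gamma q h \<longrightarrow> w = h)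
        \<and> h = (1 / gamma) *\<^sub>R ((matrix_inv D ** X
                  ** matrix_inv (transpose X ** matrix_inv D ** X + matrix_inv Varf)
                  ** matrix_inv Varf) *v Ef q)"
      unfolding Let_def h_def[symmetric] using opt uniq hform by blast
  qed
qed

end
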